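(* Let $W$ be a neat, upward-restricted layered wheel. Then the class of finite induced subgraphs of $W$ has bounded twin-width.
   Context: A layered wheel is a countably infinite graph $W$ on the same vertex set as a countably infinite, locally finite rooted tree $T$ embedded in the plane, such that: (1) for every natural number $n$, the set $L_n$ of nodes at distance $n$ from the root induces in $W$ a finite path visiting $L_n$ in the left-to-right order of the embedding; edges inside layers are layer edges, forming $E_L$; (2) every edge not in $E_L$ joins two nodes in ancestor–descendant relation in $T$; (3) there is a finite bound on the length of paths in $T$ consisting only of degree-$2$ nodes of $T$. A node is its own ancestor and descendant. $W$ is neat if $T$ has no leaf; $W$ is upward-restricted if there is an integer $t$ such that for every node $v$ there is a set $X_v$ of at most $t$ ancestors of $v$ such that in $W-E_L$ every edge with exactly one endpoint among the descendants of $v$ has its other endpoint in $X_v$. Twin-width: a partition sequence of an $n$-vertex graph $G$ is a sequence $\mathcal P_n,\dots,\mathcal P_1$ of partitions of $V(G)$ where $\mathcal P_n$ is the partition into singletons and each $\mathcal P_i$ ($i<n$) is obtained from $\mathcal P_{i+1}$ by merging two parts. For a partition $\mathcal P$, the red graph $\mathcal R(\mathcal P)$ has vertex set $\mathcal P$ and an edge between distinct parts $P,P'$ whenever there are $u,v\in P$ and $u',v'\in P'$ (possibly $u=v$ or $u'=v'$) with $uu'\in E(G)$ and $vv'\notin E(G)$. The twin-width of $G$ is the least $d$ such that $G$ has a partition sequence all of whose red graphs have maximum degree at most $d$. *)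

theory Defs
  imports "HOL-Library.Countable_Set"
begin

text \<open>A rooted tree on vertex set V with root r is given by a parent function par:
every non-root vertex has its parent in V, and iterating par from any vertex reaches r.\<close>

definition rooted_tree :: "'a set \<Rightarrow> 'a \<Rightarrow> ('a \<Rightarrow> 'a) \<Rightarrow> bool" where
  "rooted_tree V r par \<longleftrightarrow> r \<in> V \<and> (\<forall>v\<in>V. v \<noteq> r \<longrightarrow> par v \<in> V)
     \<and> (\<forall>v\<in>V. \<exists>n. (par ^^ n) v = r)"

definition children :: "'a set \<Rightarrow> 'a \<Rightarrow> ('a \<Rightarrow> 'a) \<Rightarrow> 'a \<Rightarrow> 'a set" where
  "children V r par v = {u \<in> V. u \<noteq> r \<and> par u = v}"

definition depth :: "'a \<Rightarrow> ('a \<Rightarrow> 'a) \<Rightarrow> 'a \<Rightarrow> nat" where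
  "depth r par v = (LEAST n. (par ^^ n) v = r)"

text \<open>ancestor r par u v: u is an ancestor of v (every node is its own ancestor)\<close>
definition ancestor :: "'a \<Rightarrow> ('a \<Rightarrow> 'a) \<Rightarrow> 'a \<Rightarrow> 'a \<Rightarrow> bool" where
  "ancestor r par u v \<longleftrightarrow> (\<exists>n \<le> depth r par v. (par ^^ n) v = u)"

definition layer :: "'a set \<Rightarrow> 'a \<Rightarrow> ('a \<Rightarrow> 'a) \<Rightarrow> nat \<Rightarrow> 'a set" where
  "layer V r par n = {v \<in> V. depth r par v = n}"

definition tadj :: "'a set \<Rightarrow> 'a \<Rightarrow> ('a \<Rightarrow> 'a) \<Rightarrow> 'a \<Rightarrow> 'a \<Rightarrow> bool" where
  "tadj V r par u v \<longleftrightarrow> u \<in> V \<and> v \<in> V \<and> ((u \<noteq> r \<and> par u = v) \<or> (v \<noteq> r \<and> par v = u))"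

definition tdeg :: "'a set \<Rightarrow> 'a \<Rightarrow> ('a \<Rightarrow> 'a) \<Rightarrow> 'a \<Rightarrow> nat" where
  "tdeg V r par v = card {u. tadj V r par u v}"

text \<open>a path in T, as a nonempty list of distinct vertices; its length is length xs - 1\<close>
definition tree_path :: "'a set \<Rightarrow> 'a \<Rightarrow> ('a \<Rightarrow> 'a) \<Rightarrow> 'a list \<Rightarrow> bool" where
  "tree_path V r par xs \<longleftrightarrow> xs \<noteq> [] \<and> distinct xs \<and> set xs \<subseteq> V \<and>
     (\<forall>i. Suc i < length xs \<longrightarrow> tadj V r par (xs ! i) (xs ! Suc i))"

text \<open>A plane embedding of the rooted tree, given by a left-to-right strict linear order lt on
each layer, compatible with the tree (children of a node to the left lie to the left).\<close>
definition plane_order :: "'a set \<Rightarrow> 'a \<Rightarrow> ('a \<Rightarrow> 'a) \<Rightarrow> ('a \<Rightarrow> 'a \<Rightarrow> bool) \<Rightarrow> bool" where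
  "plane_order V r par lt \<longleftrightarrow>
     (\<forall>u v. lt u v \<longrightarrow> u \<in> V \<and> v \<in> V \<and> depth r par u = depth r par v)
   \<and> (\<forall>u. \<not> lt u u)
   \<and> (\<forall>u v w. lt u v \<longrightarrow> lt v w \<longrightarrow> lt u w)
   \<and> (\<forall>u\<in>V. \<forall>v\<in>V. depth r par u = depth r par v \<longrightarrow> u = v \<or> lt u v \<or> lt v u)
   \<and> (\<forall>u\<in>V. \<forall>v\<in>V. u \<noteq> r \<longrightarrow> v \<noteq> r \<longrightarrow> lt (par u) (par v) \<longrightarrow> lt u v)"

definition simple_graph :: "'a set \<Rightarrow> ('a \<Rightarrow> 'a \<Rightarrow> bool) \<Rightarrow> bool" where
  "simple_graph V E \<longleftrightarrow> (\<forall>u v. E u v \<longrightarrow> u \<in> V \<and> v \<in> V \<and> u \<noteq> v \<and> E v u)"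

definition consecutive :: "('a \<Rightarrow> 'a \<Rightarrow> bool) \<Rightarrow> 'a \<Rightarrow> 'a \<Rightarrow> bool" where
  "consecutive lt u v \<longleftrightarrow> lt u v \<and> \<not> (\<exists>w. lt u w \<and> lt w v)"

definition layer_edge :: "'a \<Rightarrow> ('a \<Rightarrow> 'a) \<Rightarrow> ('a \<Rightarrow> 'a \<Rightarrow> bool) \<Rightarrow> 'a \<Rightarrow> 'a \<Rightarrow> bool" where
  "layer_edge r par E u v \<longleftrightarrow> E u v \<and> depth r par u = depth r par v"

definition layered_wheel ::
  "'a set \<Rightarrow> 'a \<Rightarrow> ('a \<Rightarrow> 'a) \<Rightarrow> ('a \<Rightarrow> 'a \<Rightarrow> bool) \<Rightarrow> ('a \<Rightarrow> 'a \<Rightarrow> bool) \<Rightarrow> bool" where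
  "layered_wheel V r par lt E \<longleftrightarrow>
     \<comment> \<open>T: countably infinite, locally finite rooted tree embedded in the plane\<close>
     countable V \<and> infinite V \<and> rooted_tree V r par
   \<and> (\<forall>v\<in>V. finite (children V r par v))
   \<and> plane_order V r par lt
     \<comment> \<open>W: simple graph on V\<close>
   \<and> simple_graph V E
     \<comment> \<open>(1) each layer induces a finite path in left-to-right order\<close>
   \<and> (\<forall>n. finite (layer V r par n))
   \<and> (\<forall>n. \<forall>u\<in>layer V r par n. \<forall>v\<in>layer V r par n.
          E u v \<longleftrightarrow> consecutive lt u v \<or> consecutive lt v u)
     \<comment> \<open>(2) edges not in E_L join ancestor-descendant pairs\<close>
   \<and> (\<forall>u v. E u v \<and> \<not> layer_edge r par E u v \<longrightarrow> ancestor r par u v \<or> ancestor r par v u)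
     \<comment> \<open>(3) bounded length of paths of T consisting of degree-2 nodes of T\<close>
   \<and> (\<exists>k. \<forall>xs. tree_path V r par xs \<and> (\<forall>x\<in>set xs. tdeg V r par x = 2) \<longrightarrow> length xs - 1 \<le> k)"

definition neat :: "'a set \<Rightarrow> 'a \<Rightarrow> ('a \<Rightarrow> 'a) \<Rightarrow> bool" where
  "neat V r par \<longleftrightarrow> (\<forall>v\<in>V. children V r par v \<noteq> {})"

definition upward_restricted ::
  "'a set \<Rightarrow> 'a \<Rightarrow> ('a \<Rightarrow> 'a) \<Rightarrow> ('a \<Rightarrow> 'a \<Rightarrow> bool) \<Rightarrow> bool" where
  "upward_restricted V r par E \<longleftrightarrow> (\<exists>t::nat. \<forall>v\<in>V. \<exists>X. finite X \<and> card X \<le> t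
      \<and> (\<forall>x\<in>X. ancestor r par x v)
      \<and> (\<forall>x y. E x y \<and> \<not> layer_edge r par E x y \<and> ancestor r par v x \<and> \<not> ancestor r par v y
              \<longrightarrow> y \<in> X))"

text \<open>red edge between parts P, P' (parts are subsets of S, so E restricted to them is E[S])\<close>
definition red_edge :: "('a \<Rightarrow> 'a \<Rightarrow> bool) \<Rightarrow> 'a set \<Rightarrow> 'a set \<Rightarrow> bool" where
  "red_edge E P P' \<longleftrightarrow> P \<noteq> P' \<and>
     (\<exists>u\<in>P. \<exists>v\<in>P. \<exists>u'\<in>P'. \<exists>v'\<in>P'. E u u' \<and> \<not> E v v')"

definition red_maxdeg_le :: "('a \<Rightarrow> 'a \<Rightarrow> bool) \<Rightarrow> 'a set set \<Rightarrow> nat \<Rightarrow> bool" where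
  "red_maxdeg_le E \<P> d \<longleftrightarrow> (\<forall>P\<in>\<P>. card {P'\<in>\<P>. red_edge E P P'} \<le> d)"

text \<open>partition sequence P_n, ..., P_1 with n = card S, given as a function of the index\<close>
definition partition_sequence :: "'a set \<Rightarrow> (nat \<Rightarrow> 'a set set) \<Rightarrow> bool" where
  "partition_sequence S Q \<longleftrightarrow>
     Q (card S) = {{x} | x. x \<in> S} \<and>
     (\<forall>i. 1 \<le> i \<and> i < card S \<longrightarrow>
        (\<exists>A\<in>Q (Suc i). \<exists>B\<in>Q (Suc i). A \<noteq> B \<and> Q i = insert (A \<union> B) (Q (Suc i) - {A, B})))"

definition twin_width :: "('a \<Rightarrow> 'a \<Rightarrow> bool) \<Rightarrow> 'a set \<Rightarrow> nat" where
  "twin_width E S = (LEAST d. \<exists>Q. partition_sequence S Q \<and>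
      (\<forall>i. 1 \<le> i \<and> i \<le> card S \<longrightarrow> red_maxdeg_le E (Q i) d))"

end

theory Submission
  imports Defs
begin


definition ispart :: "'a set \<Rightarrow> 'a set set \<Rightarrow> bool" where
  "ispart S X \<longleftrightarrow> (\<forall>A\<in>X. A \<noteq> {} \<and> A \<subseteq> S) \<and> \<Union>X = S \<and> (\<forall>A\<in>X. \<forall>B\<in>X. A \<noteq> B \<longrightarrow> A \<inter> B = {})"

definition refines :: "'a set set \<Rightarrow> 'a set set \<Rightarrow> bool" where
  "refines B C \<longleftrightarrow> (\<forall>b\<in>B. \<exists>c\<in>C. b \<subseteq> c)"

definition mrg :: "'a set set \<Rightarrow> 'a set set \<Rightarrow> bool" where
  "mrg X Y \<longleftrightarrow> (\<exists>A\<in>X. \<exists>B\<in>X. A \<noteq> B \<and> Y = insert (A \<union> B) (X - {A, B}))"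

definition reach :: "('a \<Rightarrow> 'a \<Rightarrow> bool) \<Rightarrow> 'a set set \<Rightarrow> 'a set set \<Rightarrow> nat \<Rightarrow> bool" where
  "reach E X Y D \<longleftrightarrow> card Y \<le> card X \<and> (\<exists>Q. Q (card X) = X \<and> Q (card Y) = Y \<and>
     (\<forall>i. card Y \<le> i \<and> i < card X \<longrightarrow> mrg (Q (Suc i)) (Q i)) \<and>
     (\<forall>i. card Y \<le> i \<and> i \<le> card X \<longrightarrow> red_maxdeg_le E (Q i) D))"

lemma reach_refl: "red_maxdeg_le E X D \<Longrightarrow> reach E X X D"
  unfolding reach_def by (rule conjI, simp, rule exI[of _ "\<lambda>_. X"]) auto

lemma reach_trans:
  assumes "reach E X Y D" "reach E Y Z D"
  shows "reach E X Z D"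
proof -
  have cY: "card Y \<le> card X" using assms(1) unfolding reach_def by (elim conjE)
  obtain Q1 where Q1: "Q1 (card X) = X" "Q1 (card Y) = Y"
    "\<forall>i. card Y \<le> i \<and> i < card X \<longrightarrow> mrg (Q1 (Suc i)) (Q1 i)"
    "\<forall>i. card Y \<le> i \<and> i \<le> card X \<longrightarrow> red_maxdeg_le E (Q1 i) D"
    using assms(1) unfolding reach_def by (elim conjE exE) 
  have cZ: "card Z \<le> card Y" using assms(2) unfolding reach_def by (elim conjE)
  obtain Q2 where Q2: "Q2 (card Y) = Y" "Q2 (card Z) = Z"
    "\<forall>i. card Z \<le> i \<and> i < card Y \<longrightarrow> mrg (Q2 (Suc i)) (Q2 i)"
    "\<forall>i. card Z \<le> i \<and> i \<le> card Y \<longrightarrow> red_maxdeg_le E (Q2 i) D"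
    using assms(2) unfolding reach_def by (elim conjE exE) 
  define Q where "Q = (\<lambda>i. if card Y \<le> i then Q1 i else Q2 i)"
  have a: "Q (card X) = X" using Q1(1) cY by (simp add: Q_def)
  have b: "Q (card Z) = Z"
  proof (cases "card Y \<le> card Z")
    case True then have eq: "card Z = card Y" using cZ by simp
    have "Q (card Z) = Q (card Y)" by (simp only: eq)
    also have "\<dots> = Q1 (card Y)" by (simp add: Q_def)
    also have "\<dots> = Y" by (rule Q1(2))
    also have "\<dots> = Q2 (card Y)" by (rule Q2(1)[symmetric])
    also have "\<dots> = Q2 (card Z)" by (simp only: eq)
    also have "\<dots> = Z" by (rule Q2(2))
    finally show ?thesis .
  next
    case False then show ?thesis using Q2(2) by (simp add: Q_def)
  qed
  have c: "\<forall>i. card Z \<le> i \<and> i < card X \<longrightarrow> mrg (Q (Suc i)) (Q i)"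
  proof (intro allI impI)
    fix i assume i: "card Z \<le> i \<and> i < card X"
    show "mrg (Q (Suc i)) (Q i)"
    proof (cases "card Y \<le> i")
      case True then show ?thesis using Q1(3) i by (simp add: Q_def)
    next
      case False
      then have lt: "i < card Y" by simp
      have m: "mrg (Q2 (Suc i)) (Q2 i)" using Q2(3) i lt by blast
      have qi: "Q i = Q2 i" using False by (simp add: Q_def)
      show ?thesis
      proof (cases "Suc i = card Y")
        case True
        then have "Q (Suc i) = Q2 (Suc i)" using Q1(2) Q2(1) by (simp add: Q_def)
        then show ?thesis using m qi by simp
      next
        case False
        then have "Q (Suc i) = Q2 (Suc i)" using lt by (simp add: Q_def)
        then show ?thesis using m qi by simp
      qed
    qed
  qed
  have d: "\<forall>i. card Z \<le> i \<and> i \<le> card X \<longrightarrow> red_maxdeg_le E (Q i) D"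
  proof (intro allI impI)
    fix i assume i: "card Z \<le> i \<and> i \<le> card X"
    show "red_maxdeg_le E (Q i) D"
    proof (cases "card Y \<le> i")
      case True then show ?thesis using Q1(4) i by (simp add: Q_def)
    next
      case False then show ?thesis using Q2(4) i by (simp add: Q_def)
    qed
  qed
  have "card Z \<le> card X" using cY cZ by simp
  then show ?thesis unfolding reach_def using a b c d by (intro conjI exI[of _ Q])
qed

lemma ispart_finite: assumes "finite S" "ispart S X" shows "finite X"
proof -
  have "X \<subseteq> Pow S" using assms(2) unfolding ispart_def by auto
  then show ?thesis using assms(1) finite_subset by blast
qed

lemma red_edge_mono:
  assumes "red_edge E d d'" "d \<subseteq> g" "d' \<subseteq> g'" "g \<noteq> g'"
  shows "red_edge E g g'"
  using assms unfolding red_edge_def by blast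

lemma redref:
  assumes S: "finite S" and D: "ispart S D" and C: "ispart S C" and ref: "refines D C"
    and cnt: "\<forall>c\<in>C. card {x\<in>D. x \<subseteq> c} \<le> m" and red: "red_maxdeg_le E C d"
  shows "red_maxdeg_le E D (m * (d + 1))"
  unfolding red_maxdeg_le_def
proof
  fix x assume x: "x \<in> D"
  obtain g where g: "g \<in> C" "x \<subseteq> g" using ref x unfolding refines_def by blast
  have fC: "finite C" using ispart_finite[OF S C] .
  have fD: "finite D" using ispart_finite[OF S D] .
  define I where "I = insert g {g'\<in>C. red_edge E g g'}"
  have sub: "{x'\<in>D. red_edge E x x'} \<subseteq> (\<Union>g'\<in>I. {y\<in>D. y \<subseteq> g'})"
  proof
    fix x' assume x': "x' \<in> {x'\<in>D. red_edge E x x'}"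
    obtain g' where g': "g' \<in> C" "x' \<subseteq> g'" using ref x' unfolding refines_def by blast
    have "g' \<in> I"
    proof (cases "g' = g")
      case False
      then have "red_edge E g g'" using red_edge_mono[of E x x' g g'] x' g g' by auto
      then show ?thesis using g' unfolding I_def by auto
    qed (simp add: I_def)
    then show "x' \<in> (\<Union>g'\<in>I. {y\<in>D. y \<subseteq> g'})" using g' x' by auto
  qed
  have fI: "finite I" using fC unfolding I_def by auto
  have cI: "card I \<le> d + 1"
  proof -
    have f2: "finite {g'\<in>C. red_edge E g g'}" using fC by simp
    have "card I \<le> Suc (card {g'\<in>C. red_edge E g g'})" unfolding I_def
      using card_insert_if[OF f2, of g] by simp
    moreover have "card {g'\<in>C. red_edge E g g'} \<le> d" using red g unfolding red_maxdeg_le_def by blast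
    ultimately show ?thesis by simp
  qed
  have "card {x'\<in>D. red_edge E x x'} \<le> card (\<Union>g'\<in>I. {y\<in>D. y \<subseteq> g'})"
    using sub fD by (intro card_mono) (auto intro: finite_subset[of _ D])
  also have "\<dots> \<le> (\<Sum>g'\<in>I. card {y\<in>D. y \<subseteq> g'})" by (rule card_UN_le[OF fI])
  also have "\<dots> \<le> card I * m"
  proof -
    have "\<forall>g'\<in>I. card {y \<in> D. y \<subseteq> g'} \<le> m" using cnt g unfolding I_def by blast
    then show ?thesis using sum_bounded_above[of I "\<lambda>g'. card {y \<in> D. y \<subseteq> g'}" m] by simp
  qed
  also have "\<dots> \<le> (d+1) * m" using mult_le_mono1[OF cI, of m] by simp
  finally show "card {x'\<in>D. red_edge E x x'} \<le> m * (d + 1)" by (metis mult.commute)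
qed


lemma reach_step:
  assumes "mrg X Y" "card X = Suc (card Y)" "red_maxdeg_le E X D" "red_maxdeg_le E Y D"
  shows "reach E X Y D"
proof -
  define Q where "Q = (\<lambda>i. if i = card X then X else Y)"
  have a: "Q (card X) = X" by (simp add: Q_def)
  have b: "Q (card Y) = Y" using assms(2) by (simp add: Q_def)
  have c: "\<forall>i. card Y \<le> i \<and> i < card X \<longrightarrow> mrg (Q (Suc i)) (Q i)"
  proof (intro allI impI)
    fix i assume "card Y \<le> i \<and> i < card X"
    then have "i = card Y" using assms(2) by simp
    then show "mrg (Q (Suc i)) (Q i)" using assms(1,2) by (simp add: Q_def)
  qed
  have d: "\<forall>i. card Y \<le> i \<and> i \<le> card X \<longrightarrow> red_maxdeg_le E (Q i) D"
    using assms(3,4) by (simp add: Q_def)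
  have "card Y \<le> card X" using assms(2) by simp
  then show ?thesis unfolding reach_def using a b c d by (intro conjI exI[of _ Q])
qed

lemma ispart_uniq: "ispart S C \<Longrightarrow> c \<in> C \<Longrightarrow> c' \<in> C \<Longrightarrow> x \<in> c \<Longrightarrow> x \<in> c' \<Longrightarrow> c = c'"
  unfolding ispart_def by (metis disjoint_iff)

lemma ispart_sub: "ispart S C \<Longrightarrow> c \<in> C \<Longrightarrow> c \<subseteq> S"
  unfolding ispart_def by simp

lemma ispart_ne: "ispart S C \<Longrightarrow> c \<in> C \<Longrightarrow> c \<noteq> {}"
  unfolding ispart_def by simp

lemma ispart_cover: "ispart S C \<Longrightarrow> x \<in> S \<Longrightarrow> \<exists>c\<in>C. x \<in> c"
  unfolding ispart_def by auto

lemma ispart_eq: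
  assumes B: "ispart S B" and C: "ispart S C" and ref: "refines B C"
    and uniq: "\<forall>c\<in>C. \<forall>b1\<in>B. \<forall>b2\<in>B. b1 \<subseteq> c \<longrightarrow> b2 \<subseteq> c \<longrightarrow> b1 = b2"
  shows "B = C"
proof -
  have key: "b = c" if b: "b \<in> B" and c: "c \<in> C" and bc: "b \<subseteq> c" for b c
  proof
    show "c \<subseteq> b"
    proof
      fix x assume x: "x \<in> c"
      then have "x \<in> S" using ispart_sub[OF C c] by blast
      then obtain b' where b': "b' \<in> B" "x \<in> b'" using ispart_cover[OF B] by blast
      obtain c' where c': "c' \<in> C" "b' \<subseteq> c'" using ref b' unfolding refines_def by blast
      have "c' = c" using ispart_uniq[OF C c'(1) c, of x] c'(2) b'(2) x by blast
      then have "b' = b" using uniq c b b' bc c' by blast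
      then show "x \<in> b" using b' by simp
    qed
  qed (rule bc)
  show ?thesis
  proof
    show "B \<subseteq> C"
    proof
      fix b assume b: "b \<in> B"
      obtain c where c: "c \<in> C" "b \<subseteq> c" using ref b unfolding refines_def by blast
      then show "b \<in> C" using key[OF b c] by simp
    qed
    show "C \<subseteq> B"
    proof
      fix c assume c: "c \<in> C"
      then obtain x where x: "x \<in> c" using ispart_ne[OF C c] by blast
      then have "x \<in> S" using ispart_sub[OF C c] by blast
      then obtain b where b: "b \<in> B" "x \<in> b" using ispart_cover[OF B] by blast
      obtain c' where c': "c' \<in> C" "b \<subseteq> c'" using ref b unfolding refines_def by blast
      have "c' = c" using ispart_uniq[OF C c'(1) c, of x] c'(2) b(2) x by blast
      then show "c \<in> B" using key[OF b(1) c'(1) c'(2)] b by simp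
    qed
  qed
qed

lemma chain_aux:
  assumes S: "finite S" and C: "ispart S C" and red: "red_maxdeg_le E C d"
  shows "\<forall>B. card B = n \<longrightarrow> ispart S B \<longrightarrow> refines B C \<longrightarrow>
           (\<forall>c\<in>C. card {b\<in>B. b \<subseteq> c} \<le> m) \<longrightarrow> reach E B C (m * (d + 1))"
proof (induction n)
  case 0
  show ?case
  proof (intro allI impI)
    fix B :: "'a set set" assume B: "card B = 0" "ispart S B" "refines B C"
      "\<forall>c\<in>C. card {b\<in>B. b \<subseteq> c} \<le> m"
    have "B = C"
      by (rule ispart_eq[OF B(2) C B(3)]) (use B(1) ispart_finite[OF S B(2)] in auto)
    then show "reach E B C (m * (d + 1))"
      using reach_refl redref[OF S B(2) C B(3) B(4) red] by simp
  qed
next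
  case (Suc n)
  show ?case
  proof (intro allI impI)
    fix B :: "'a set set" assume B: "card B = Suc n" "ispart S B" "refines B C"
      "\<forall>c\<in>C. card {b\<in>B. b \<subseteq> c} \<le> m"
    have fB: "finite B" using ispart_finite[OF S B(2)] .
    have rB: "red_maxdeg_le E B (m * (d + 1))" using redref[OF S B(2) C B(3) B(4) red] .
    show "reach E B C (m * (d + 1))"
    proof (cases "\<forall>c\<in>C. \<forall>b1\<in>B. \<forall>b2\<in>B. b1 \<subseteq> c \<longrightarrow> b2 \<subseteq> c \<longrightarrow> b1 = b2")
      case True
      then have "B = C" by (rule ispart_eq[OF B(2) C B(3)])
      then show ?thesis using reach_refl rB by simp
    next
      case False
      then obtain c b1 b2 where c: "c \<in> C" and b: "b1 \<in> B" "b2 \<in> B" "b1 \<subseteq> c" "b2 \<subseteq> c" "b1 \<noteq> b2"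
        by blast
      define B' where "B' = insert (b1 \<union> b2) (B - {b1, b2})"
      have ne: "b1 \<noteq> {}" "b2 \<noteq> {}" using B(2) b unfolding ispart_def by auto
      have notin: "b1 \<union> b2 \<notin> B - {b1, b2}"
      proof
        assume "b1 \<union> b2 \<in> B - {b1, b2}"
        then have "b1 \<union> b2 \<in> B" "b1 \<union> b2 \<noteq> b1" by auto
        then show False using ispart_uniq[OF B(2) _ b(1)] ne(1) by blast
      qed
      have cB': "card B' = n"
      proof -
        have "card (B - {b1, b2}) = card B - 2" using fB b by (simp add: card_Diff_subset)
        moreover have "finite (B - {b1, b2})" using fB by simp
        moreover have "card {b1, b2} \<le> card B" using fB b by (intro card_mono) auto
        ultimately show ?thesis unfolding B'_def using notin B(1) b(5) by simp
      qed
      have pB': "ispart S B'"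
        unfolding ispart_def
      proof (intro conjI)
        show "\<forall>A\<in>B'. A \<noteq> {} \<and> A \<subseteq> S"
          unfolding B'_def using ispart_sub[OF B(2)] ispart_ne[OF B(2)] b by auto
        show "\<Union>B' = S" using B(2) b unfolding B'_def ispart_def by auto
        show "\<forall>A\<in>B'. \<forall>C\<in>B'. A \<noteq> C \<longrightarrow> A \<inter> C = {}"
          unfolding B'_def using ispart_uniq[OF B(2)] b by blast
      qed
      have rfB': "refines B' C" using B(3) b c unfolding refines_def B'_def by blast
      have cntB': "\<forall>c'\<in>C. card {x\<in>B'. x \<subseteq> c'} \<le> m"
      proof
        fix c' assume c': "c' \<in> C"
        have fin: "finite {x\<in>B. x \<subseteq> c'}" using fB by simp
        show "card {x\<in>B'. x \<subseteq> c'} \<le> m"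
        proof (cases "b1 \<union> b2 \<subseteq> c'")
          case True
          have "{x\<in>B'. x \<subseteq> c'} = insert (b1 \<union> b2) ({x\<in>B. x \<subseteq> c'} - {b1, b2})"
            using True unfolding B'_def by blast
          then have "card {x\<in>B'. x \<subseteq> c'} \<le> Suc (card ({x\<in>B. x \<subseteq> c'} - {b1, b2}))"
            using fin by (simp add: card_insert_if)
          also have "\<dots> = Suc (card {x\<in>B. x \<subseteq> c'} - 2)"
            using fin True b by (subst card_Diff_subset) auto
          also have "\<dots> \<le> card {x\<in>B. x \<subseteq> c'}"
          proof -
            have "{b1, b2} \<subseteq> {x\<in>B. x \<subseteq> c'}" using True b by auto
            then have "card {b1, b2} \<le> card {x\<in>B. x \<subseteq> c'}" using fin by (rule card_mono[rotated])
            then show ?thesis using b(5) by simp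
          qed
          finally show ?thesis using B(4) c' le_trans by blast
        next
          case False
          have "{x\<in>B'. x \<subseteq> c'} \<subseteq> {x\<in>B. x \<subseteq> c'}" using False unfolding B'_def by blast
          then have "card {x\<in>B'. x \<subseteq> c'} \<le> card {x\<in>B. x \<subseteq> c'}" using fin by (rule card_mono[rotated])
          then show ?thesis using B(4) c' le_trans by blast
        qed
      qed
      have m: "mrg B B'" unfolding mrg_def B'_def using b by blast
      have rB': "red_maxdeg_le E B' (m * (d + 1))" using redref[OF S pB' C rfB' cntB' red] .
      have st: "reach E B B' (m * (d + 1))" by (rule reach_step[OF m _ rB rB']) (simp add: cB' B(1))
      have "reach E B' C (m * (d + 1))" using Suc.IH cB' pB' rfB' cntB' by blast
      then show ?thesis by (rule reach_trans[OF st])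
    qed
  qed
qed

lemma chain:
  assumes "finite S" "ispart S C" "red_maxdeg_le E C d" "ispart S B" "refines B C"
    "\<forall>c\<in>C. card {b\<in>B. b \<subseteq> c} \<le> m"
  shows "reach E B C (m * (d + 1))"
  using chain_aux[OF assms(1-3), of "card B" m] assms(4-6) by blast



lemma fin_min:
  assumes "finite A" "A \<noteq> {}" "\<And>x. \<not> R x x" "\<And>x y z. R x y \<Longrightarrow> R y z \<Longrightarrow> R x z"
  shows "\<exists>m\<in>A. \<forall>x\<in>A. \<not> R x m"
  using assms(1,2)
proof (induction A rule: finite_ne_induct)
  case (singleton x) then show ?case using assms(3) by auto
next
  case (insert x F)
  then obtain m where m: "m \<in> F" "\<forall>y\<in>F. \<not> R y m" by blast
  show ?case
  proof (cases "R x m")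
    case True
    have "\<forall>y\<in>insert x F. \<not> R y x"
    proof
      fix y assume y: "y \<in> insert x F"
      show "\<not> R y x"
      proof (cases "y = x")
        case True then show ?thesis using assms(3) by simp
      next
        case False
        then have "y \<in> F" using y by simp
        show ?thesis
        proof
          assume "R y x"
          then have "R y m" using \<open>R x m\<close> assms(4) by blast
          then show False using \<open>y \<in> F\<close> m(2) by blast
        qed
      qed
    qed
    then show ?thesis by blast
  next
    case False
    then show ?thesis using m by blast
  qed
qed

locale LW =
  fixes V :: "'a set" and r :: 'a and par :: "'a \<Rightarrow> 'a" and lt :: "'a \<Rightarrow> 'a \<Rightarrow> bool"
    and E :: "'a \<Rightarrow> 'a \<Rightarrow> bool" and t :: nat and Xf :: "'a \<Rightarrow> 'a set"
  assumes wheel: "layered_wheel V r par lt E"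
    and neat: "neat V r par"
    and Xf: "\<forall>v\<in>V. finite (Xf v) \<and> card (Xf v) \<le> t \<and> (\<forall>x\<in>Xf v. ancestor r par x v) \<and>
      (\<forall>x y. E x y \<and> \<not> layer_edge r par E x y \<and> ancestor r par v x \<and> \<not> ancestor r par v y \<longrightarrow> y \<in> Xf v)"
begin

abbreviation "dep \<equiv> depth r par"
abbreviation "anc \<equiv> ancestor r par"
abbreviation "consec \<equiv> consecutive lt"
abbreviation "L \<equiv> layer V r par"

lemma rt: "rooted_tree V r par" using wheel unfolding layered_wheel_def by blast
lemma r_V: "r \<in> V" using rt unfolding rooted_tree_def by blast
lemma par_V: "v \<in> V \<Longrightarrow> v \<noteq> r \<Longrightarrow> par v \<in> V" using rt unfolding rooted_tree_def by blast
lemma reach_r: "v \<in> V \<Longrightarrow> \<exists>n. (par ^^ n) v = r" using rt unfolding rooted_tree_def by blast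

lemma po: "plane_order V r par lt" using wheel unfolding layered_wheel_def by blast
lemma lt_V: "lt u v \<Longrightarrow> u \<in> V \<and> v \<in> V \<and> dep u = dep v" using po unfolding plane_order_def by blast
lemma lt_irrefl: "\<not> lt u u" using po unfolding plane_order_def by blast
lemma lt_trans: "lt u v \<Longrightarrow> lt v w \<Longrightarrow> lt u w" using po unfolding plane_order_def by blast
lemma lt_total: "u \<in> V \<Longrightarrow> v \<in> V \<Longrightarrow> dep u = dep v \<Longrightarrow> u = v \<or> lt u v \<or> lt v u"
  using po unfolding plane_order_def by blast
lemma lt_par: "u \<in> V \<Longrightarrow> v \<in> V \<Longrightarrow> u \<noteq> r \<Longrightarrow> v \<noteq> r \<Longrightarrow> lt (par u) (par v) \<Longrightarrow> lt u v"
  using po unfolding plane_order_def by blast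
lemma lt_asym: "lt u v \<Longrightarrow> \<not> lt v u" using lt_trans lt_irrefl by blast

lemma sg: "simple_graph V E" using wheel unfolding layered_wheel_def by blast
lemma E_V: "E u v \<Longrightarrow> u \<in> V \<and> v \<in> V \<and> u \<noteq> v" using sg unfolding simple_graph_def by blast
lemma E_sym: "E u v \<Longrightarrow> E v u" using sg unfolding simple_graph_def by blast

lemma L_fin: "finite (L n)" using wheel unfolding layered_wheel_def by blast
lemma L_E0: "\<forall>n. \<forall>u\<in>L n. \<forall>v\<in>L n. E u v \<longleftrightarrow> consec u v \<or> consec v u"
  using wheel unfolding layered_wheel_def by blast
lemma L_E: "u \<in> V \<Longrightarrow> v \<in> V \<Longrightarrow> dep u = dep v \<Longrightarrow> E u v \<longleftrightarrow> consec u v \<or> consec v u"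
proof -
  assume a: "u \<in> V" "v \<in> V" "dep u = dep v"
  then have "u \<in> L (dep u)" "v \<in> L (dep u)" unfolding layer_def by auto
  then show ?thesis using L_E0 by blast
qed
lemma nonlayer0: "\<forall>u v. E u v \<and> \<not> layer_edge r par E u v \<longrightarrow> anc u v \<or> anc v u"
  using wheel unfolding layered_wheel_def by blast
lemma nonlayer: "E u v \<Longrightarrow> dep u \<noteq> dep v \<Longrightarrow> anc u v \<or> anc v u"
  using nonlayer0 unfolding layer_edge_def by blast

lemma neat_ch: "v \<in> V \<Longrightarrow> \<exists>c. c \<in> V \<and> c \<noteq> r \<and> par c = v"
  using neat unfolding neat_def children_def by blast

lemma Xf_fin: "v \<in> V \<Longrightarrow> finite (Xf v)" using Xf by blast
lemma Xf_card: "v \<in> V \<Longrightarrow> card (Xf v) \<le> t" using Xf by blast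
lemma Xf_ur: "v \<in> V \<Longrightarrow> E x y \<Longrightarrow> dep x \<noteq> dep y \<Longrightarrow> anc v x \<Longrightarrow> \<not> anc v y \<Longrightarrow> y \<in> Xf v"
  using Xf unfolding layer_edge_def by blast

lemma consec_lt: "consec u v \<Longrightarrow> lt u v" unfolding consecutive_def by blast
lemma consec_no: "consec u v \<Longrightarrow> lt u w \<Longrightarrow> lt w v \<Longrightarrow> False" unfolding consecutive_def by blast
lemma consecI: "lt u v \<Longrightarrow> (\<And>w. lt u w \<Longrightarrow> lt w v \<Longrightarrow> False) \<Longrightarrow> consec u v"
  unfolding consecutive_def by blast

lemma consec_uniq_r: assumes "consec a b" "consec a b'" shows "b = b'"
proof -
  have "lt a b" "lt a b'" using assms consec_lt by auto
  then have "b \<in> V" "b' \<in> V" "dep b = dep b'" using lt_V[OF \<open>lt a b\<close>] lt_V[OF \<open>lt a b'\<close>] by auto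
  then have "b = b' \<or> lt b b' \<or> lt b' b" using lt_total by blast
  then show ?thesis using assms consec_no \<open>lt a b\<close> \<open>lt a b'\<close> by blast
qed

lemma consec_uniq_l: assumes "consec b a" "consec b' a" shows "b = b'"
proof -
  have "lt b a" "lt b' a" using assms consec_lt by auto
  then have "b \<in> V" "b' \<in> V" "dep b = dep b'" using lt_V[OF \<open>lt b a\<close>] lt_V[OF \<open>lt b' a\<close>] by auto
  then have "b = b' \<or> lt b b' \<or> lt b' b" using lt_total by blast
  then show ?thesis using assms consec_no \<open>lt b a\<close> \<open>lt b' a\<close> by blast
qed

lemma dep_r: "v \<in> V \<Longrightarrow> (par ^^ dep v) v = r"
  unfolding depth_def using reach_r by (rule LeastI_ex)

lemma dep_le: "(par ^^ n) v = r \<Longrightarrow> dep v \<le> n"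
  unfolding depth_def by (rule Least_le)

lemma dep_root: "dep r = 0"
  unfolding depth_def by simp

lemma dep0: "v \<in> V \<Longrightarrow> dep v = 0 \<Longrightarrow> v = r"
  using dep_r by fastforce

lemma dep_par: assumes v: "v \<in> V" "v \<noteq> r" shows "dep v = Suc (dep (par v))"
proof -
  have pv: "par v \<in> V" using par_V v by blast
  have "dep v \<noteq> 0" using dep_r[OF v(1)] v(2) by (cases "dep v") auto
  then obtain k where k: "dep v = Suc k" by (cases "dep v") auto
  have "(par ^^ k) (par v) = r" using dep_r[OF v(1)] k by (simp add: funpow_Suc_right del: funpow.simps)
  then have a: "dep (par v) \<le> k" by (rule dep_le)
  have "(par ^^ Suc (dep (par v))) v = r" using dep_r[OF pv] by (simp add: funpow_Suc_right del: funpow.simps)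
  then have "dep v \<le> Suc (dep (par v))" by (rule dep_le)
  then show ?thesis using a k by simp
qed

lemma up_V: "v \<in> V \<Longrightarrow> i \<le> dep v \<Longrightarrow> (par ^^ i) v \<in> V \<and> dep ((par ^^ i) v) = dep v - i"
proof (induction i)
  case 0 then show ?case by simp
next
  case (Suc i)
  then have w: "(par ^^ i) v \<in> V" "dep ((par ^^ i) v) = dep v - i" by auto
  have "(par ^^ i) v \<noteq> r" using w(2) Suc.prems dep_root by auto
  then have "par ((par ^^ i) v) \<in> V" "dep ((par ^^ i) v) = Suc (dep (par ((par ^^ i) v)))"
    using par_V dep_par w(1) by auto
  then show ?case using w(2) by simp
qed

definition at :: "'a \<Rightarrow> nat \<Rightarrow> 'a" where "at v l = (par ^^ (dep v - l)) v"

lemma at_V: "v \<in> V \<Longrightarrow> l \<le> dep v \<Longrightarrow> at v l \<in> V \<and> dep (at v l) = l"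
  unfolding at_def using up_V[of v "dep v - l"] by simp

lemma at_self: "at v (dep v) = v" unfolding at_def by simp

lemma anc_char: assumes "v \<in> V" shows "anc u v \<longleftrightarrow> dep u \<le> dep v \<and> at v (dep u) = u"
proof
  assume "anc u v"
  then obtain n where n: "n \<le> dep v" "(par ^^ n) v = u" unfolding ancestor_def by blast
  then have "dep u = dep v - n" using up_V[OF assms n(1)] by simp
  then have "dep v - dep u = n" using n(1) by simp
  then show "dep u \<le> dep v \<and> at v (dep u) = u" using n \<open>dep u = dep v - n\<close> unfolding at_def by simp
next
  assume a: "dep u \<le> dep v \<and> at v (dep u) = u"
  show "anc u v" unfolding ancestor_def at_def
    by (rule exI[of _ "dep v - dep u"]) (use a in \<open>auto simp: at_def\<close>)
qed

lemma anc_V: "v \<in> V \<Longrightarrow> anc u v \<Longrightarrow> u \<in> V"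
  using anc_char at_V by metis

lemma anc_refl: "v \<in> V \<Longrightarrow> anc v v" using anc_char at_self by simp

lemma at_anc: assumes "v \<in> V" "l \<le> dep v" shows "anc (at v l) v"
  using anc_char[OF assms(1)] at_V[OF assms] assms(2) by simp

lemma anc_same: "v \<in> V \<Longrightarrow> anc u v \<Longrightarrow> dep u = dep v \<Longrightarrow> u = v"
  using anc_char at_self by metis

lemma at_at: assumes "v \<in> V" "l \<le> m" "m \<le> dep v" shows "at (at v m) l = at v l"
proof -
  have "dep (at v m) = m" using at_V assms by simp
  then have "at (at v m) l = (par ^^ (m - l)) ((par ^^ (dep v - m)) v)" unfolding at_def by simp
  also have "\<dots> = (par ^^ ((m - l) + (dep v - m))) v" by (simp add: funpow_add)
  also have "(m - l) + (dep v - m) = dep v - l" using assms by simp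
  finally show ?thesis unfolding at_def .
qed

lemma at_anc_eq: assumes "v \<in> V" "anc u v" "l \<le> dep u" shows "at u l = at v l"
proof -
  have "dep u \<le> dep v" "at v (dep u) = u" using anc_char[OF assms(1)] assms(2) by auto
  then show ?thesis using at_at[OF assms(1) assms(3)] by simp
qed

lemma par_at: assumes "v \<in> V" "Suc l \<le> dep v" shows "par (at v (Suc l)) = at v l"
proof -
  have "dep v - l = Suc (dep v - Suc l)" using assms(2) by simp
  then show ?thesis unfolding at_def by simp
qed

lemma par_anc: assumes "v \<in> V" "v \<noteq> r" shows "anc (par v) v"
  unfolding ancestor_def using dep_par[OF assms]
  by (intro exI[of _ "Suc 0"]) simp

lemma at_par: assumes "v \<in> V" "v \<noteq> r" "l \<le> dep (par v)" shows "at (par v) l = at v l"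
  using at_anc_eq[OF assms(1) par_anc[OF assms(1,2)] assms(3)] .

lemma at_dep_ge: "v \<in> V \<Longrightarrow> anc u v \<Longrightarrow> dep u \<le> dep v" using anc_char by blast

lemma desc_order_aux:
  "\<forall>x y. x \<in> V \<longrightarrow> y \<in> V \<longrightarrow> dep x = dep y \<longrightarrow> dep x = l + n \<longrightarrow> lt (at x l) (at y l) \<longrightarrow> lt x y"
proof (induction n)
  case 0 then show ?case using at_self by (metis add_0_right)
next
  case (Suc n)
  show ?case
  proof (intro allI impI)
    fix x y assume a: "x \<in> V" "y \<in> V" "dep x = dep y" "dep x = l + Suc n" "lt (at x l) (at y l)"
    have xr: "x \<noteq> r" "y \<noteq> r" using a dep_root by auto
    have d: "dep (par x) = l + n" "dep (par y) = l + n" using dep_par a xr by auto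
    have "at (par x) l = at x l" "at (par y) l = at y l" using at_par a xr d by auto
    then have "lt (par x) (par y)" using Suc.IH par_V a xr d by auto
    then show "lt x y" using lt_par a xr by blast
  qed
qed

lemma desc_order: "x \<in> V \<Longrightarrow> y \<in> V \<Longrightarrow> dep x = dep y \<Longrightarrow> l \<le> dep x \<Longrightarrow> lt (at x l) (at y l) \<Longrightarrow> lt x y"
  using desc_order_aux[of l "dep x - l"] by simp

lemma exists_desc: "a \<in> V \<Longrightarrow> dep a \<le> m \<Longrightarrow> \<exists>x. x \<in> V \<and> dep x = m \<and> anc a x"
proof (induction m)
  case 0 then show ?case using anc_refl by auto
next
  case (Suc m)
  show ?case
  proof (cases "dep a = Suc m")
    case True then show ?thesis using Suc.prems anc_refl by auto
  next
    case False
    then obtain x where x: "x \<in> V" "dep x = m" "anc a x" using Suc by auto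
    obtain c where c: "c \<in> V" "c \<noteq> r" "par c = x" using neat_ch[OF x(1)] by blast
    have dc: "dep c = Suc m" using dep_par[OF c(1,2)] c(3) x(2) by simp
    have "dep a \<le> m" using Suc.prems False by simp
    then have "at c (dep a) = at x (dep a)" using at_par[OF c(1,2)] c(3) x(2) by simp
    also have "\<dots> = a" using anc_char[OF x(1)] x(3) by simp
    finally have "anc a c" using anc_char[OF c(1)] dc \<open>dep a \<le> m\<close> by simp
    then show ?thesis using c dc by blast
  qed
qed

lemma consec_up:
  assumes x: "x \<in> V" "y \<in> V" "dep x = dep y" "l \<le> dep x" "consec x y" "at x l \<noteq> at y l"
  shows "consec (at x l) (at y l)"
proof -
  have a: "at x l \<in> V" "dep (at x l) = l" "at y l \<in> V" "dep (at y l) = l" using at_V x by auto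
  have nl: "\<not> lt (at y l) (at x l)"
  proof
    assume "lt (at y l) (at x l)"
    then have "lt y x" using desc_order x by simp
    then show False using consec_lt[OF x(5)] lt_asym by blast
  qed
  then have l1: "lt (at x l) (at y l)" using lt_total a x(6) by metis
  show ?thesis
  proof (rule consecI[OF l1])
    fix z assume z: "lt (at x l) z" "lt z (at y l)"
    then have zV: "z \<in> V" "dep z = l" using lt_V a by auto
    obtain z' where z': "z' \<in> V" "dep z' = dep x" "anc z z'" using exists_desc[OF zV(1)] zV(2) x(4) by auto
    have az: "at z' l = z" using anc_char[OF z'(1)] z'(3) zV(2) by simp
    have "lt x z'" using desc_order[OF x(1) z'(1)] z' x az z by simp
    moreover have "lt z' y" using desc_order[OF z'(1) x(2)] z' x az z by simp
    ultimately show False using consec_no[OF x(5)] by blast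
  qed
qed

lemma consec_down:
  assumes ab: "consec a b" and m: "dep a \<le> m"
  shows "\<exists>x y. x \<in> V \<and> y \<in> V \<and> dep x = m \<and> dep y = m \<and> at x (dep a) = a \<and> at y (dep a) = b \<and> consec x y"
proof -
  have lab: "lt a b" using consec_lt[OF ab] .
  have abV: "a \<in> V" "b \<in> V" "dep a = dep b" using lt_V[OF lab] by auto
  define l where "l = dep a"
  define Da where "Da = {x \<in> L m. at x l = a}"
  have fDa: "finite Da" unfolding Da_def using L_fin by simp
  obtain x0 where x0: "x0 \<in> V" "dep x0 = m" "anc a x0" using exists_desc[OF abV(1) m] by blast
  have "x0 \<in> Da" unfolding Da_def layer_def l_def using x0 anc_char[OF x0(1)] by simp
  then obtain xm where xm: "xm \<in> Da" "\<forall>z\<in>Da. \<not> lt xm z"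
    using fin_min[OF fDa, of "\<lambda>u v. lt v u"] lt_irrefl lt_trans by blast
  have xmV: "xm \<in> V" "dep xm = m" "at xm l = a" using xm(1) unfolding Da_def layer_def by auto
  obtain y0 where y0: "y0 \<in> V" "dep y0 = m" "anc b y0" using exists_desc[OF abV(2)] m abV(3) by metis
  have ay0: "at y0 l = b" using anc_char[OF y0(1)] y0(3) abV(3) l_def by simp
  have lm: "l \<le> m" using m l_def by simp
  have "lt xm y0" using desc_order[OF xmV(1) y0(1)] xmV y0 ay0 lab lm by simp
  define G where "G = {y \<in> L m. lt xm y}"
  have fG: "finite G" unfolding G_def using L_fin by simp
  have "y0 \<in> G" unfolding G_def layer_def using y0 \<open>lt xm y0\<close> by simp
  then obtain ym where ym: "ym \<in> G" "\<forall>z\<in>G. \<not> lt z ym"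
    using fin_min[OF fG, of lt] lt_irrefl lt_trans by blast
  have ymV: "ym \<in> V" "dep ym = m" "lt xm ym" using ym(1) unfolding G_def layer_def by auto
  have cxy: "consec xm ym"
  proof (rule consecI[OF ymV(3)])
    fix z assume z: "lt xm z" "lt z ym"
    then have "z \<in> G" unfolding G_def layer_def using lt_V xmV by auto
    then show False using ym(2) z(2) by blast
  qed
  define c where "c = at ym l"
  have cV: "c \<in> V" "dep c = l" using at_V[OF ymV(1)] lm ymV(2) c_def by auto
  have "c \<noteq> a"
  proof
    assume "c = a"
    then have "ym \<in> Da" unfolding Da_def layer_def c_def using ymV by simp
    then show False using xm(2) ymV(3) by blast
  qed
  have "\<not> lt c a"
  proof
    assume "lt c a"
    then have "lt ym xm" using desc_order[OF ymV(1) xmV(1)] ymV xmV lm c_def by simp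
    then show False using ymV(3) lt_asym by blast
  qed
  then have "lt a c" using lt_total[OF abV(1) cV(1)] cV l_def \<open>c \<noteq> a\<close> by metis
  have "c = b"
  proof (rule ccontr)
    assume cb: "c \<noteq> b"
    have "\<not> lt c b" using consec_no[OF ab \<open>lt a c\<close>] by blast
    then have "lt b c" using lt_total[OF abV(2) cV(1)] cV l_def abV(3) cb by metis
    then have "lt y0 ym" using desc_order[OF y0(1) ymV(1)] y0 ymV lm ay0 c_def by simp
    then show False using consec_no[OF cxy \<open>lt xm y0\<close>] by blast
  qed
  then have e1: "at ym (dep a) = b" using c_def l_def by simp
  have e2: "at xm (dep a) = a" using xmV(3) l_def by simp
  show ?thesis
    by (rule exI[of _ xm], rule exI[of _ ym]) (intro conjI xmV(1,2) ymV(1,2) cxy e1 e2)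
qed

end



definition parts :: "'a set \<Rightarrow> ('a \<Rightarrow> 'k) \<Rightarrow> 'a set set" where
  "parts S f = (\<lambda>u. {x\<in>S. f x = f u}) ` S"

lemma parts_ispart: "ispart S (parts S f)"
  unfolding ispart_def
proof (intro conjI)
  show "\<forall>A\<in>parts S f. A \<noteq> {} \<and> A \<subseteq> S" unfolding parts_def by blast
  show "\<Union> (parts S f) = S" unfolding parts_def by blast
  show "\<forall>A\<in>parts S f. \<forall>B\<in>parts S f. A \<noteq> B \<longrightarrow> A \<inter> B = {}"
  proof (intro ballI impI)
    fix A B assume A: "A \<in> parts S f" and B: "B \<in> parts S f" and ne: "A \<noteq> B"
    obtain u where u: "A = {x\<in>S. f x = f u}" using A unfolding parts_def by blast
    obtain v where v: "B = {x\<in>S. f x = f v}" using B unfolding parts_def by blast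
    show "A \<inter> B = {}"
    proof (rule ccontr)
      assume "A \<inter> B \<noteq> {}"
      then obtain x where "x \<in> A" "x \<in> B" by blast
      then have "f u = f v" using u v by simp
      then show False using ne u v by simp
    qed
  qed
qed

lemma parts_refines:
  assumes "\<forall>x\<in>S. \<forall>y\<in>S. f x = f y \<longrightarrow> g x = g y"
  shows "refines (parts S f) (parts S g)"
  unfolding refines_def parts_def
proof
  fix b assume "b \<in> (\<lambda>u. {x \<in> S. f x = f u}) ` S"
  then obtain u where u: "u \<in> S" "b = {x \<in> S. f x = f u}" by blast
  have "b \<subseteq> {x \<in> S. g x = g u}"
  proof
    fix x assume "x \<in> b"
    then have x: "x \<in> S" "f x = f u" using u(2) by auto
    then have "g x = g u" using assms u(1) by blast
    then show "x \<in> {x \<in> S. g x = g u}" using x(1) by simp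
  qed
  then show "\<exists>c\<in>(\<lambda>u. {x \<in> S. g x = g u}) ` S. b \<subseteq> c" using u(1) by blast
qed

lemma parts_count:
  assumes u: "u \<in> S" and K: "f ` {x\<in>S. g x = g u} \<subseteq> K" "finite K" "card K \<le> m"
  shows "card {b\<in>parts S f. b \<subseteq> {x\<in>S. g x = g u}} \<le> m"
proof -
  have "{b\<in>parts S f. b \<subseteq> {x\<in>S. g x = g u}} \<subseteq> (\<lambda>\<kappa>. {x\<in>S. f x = \<kappa>}) ` K"
  proof
    fix b assume b: "b \<in> {b\<in>parts S f. b \<subseteq> {x\<in>S. g x = g u}}"
    then obtain v where v: "v \<in> S" "b = {x\<in>S. f x = f v}" unfolding parts_def by blast
    then have "v \<in> b" by simp
    then have "g v = g u" using b by blast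
    then have "f v \<in> K" using K(1) v(1) by blast
    then show "b \<in> (\<lambda>\<kappa>. {x\<in>S. f x = \<kappa>}) ` K" using v(2) by blast
  qed
  then have "card {b\<in>parts S f. b \<subseteq> {x\<in>S. g x = g u}} \<le> card ((\<lambda>\<kappa>. {x\<in>S. f x = \<kappa>}) ` K)"
    using K(2) by (intro card_mono) auto
  also have "\<dots> \<le> card K" by (rule card_image_le[OF K(2)])
  finally show ?thesis using K(3) by simp
qed

lemma parts_red:
  assumes u: "u \<in> S"
    and K: "\<And>u'. u' \<in> S \<Longrightarrow> red_edge E {x\<in>S. f x = f u} {x\<in>S. f x = f u'} \<Longrightarrow> f u' \<in> K"
      "finite K" "card K \<le> m"
  shows "card {g\<in>parts S f. red_edge E {x\<in>S. f x = f u} g} \<le> m"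
proof -
  have "{g\<in>parts S f. red_edge E {x\<in>S. f x = f u} g} \<subseteq> (\<lambda>\<kappa>. {x\<in>S. f x = \<kappa>}) ` K"
  proof
    fix g assume g: "g \<in> {g\<in>parts S f. red_edge E {x\<in>S. f x = f u} g}"
    then obtain v where v: "v \<in> S" "g = {x\<in>S. f x = f v}" unfolding parts_def by blast
    then have "f v \<in> K" using K(1) g by blast
    then show "g \<in> (\<lambda>\<kappa>. {x\<in>S. f x = \<kappa>}) ` K" using v(2) by blast
  qed
  then have "card {g\<in>parts S f. red_edge E {x\<in>S. f x = f u} g} \<le> card ((\<lambda>\<kappa>. {x\<in>S. f x = \<kappa>}) ` K)"
    using K(2) by (intro card_mono) auto
  also have "\<dots> \<le> card K" by (rule card_image_le[OF K(2)])
  finally show ?thesis using K(3) by simp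
qed

lemma parts_red_le:
  assumes "\<And>u. u \<in> S \<Longrightarrow> card {g\<in>parts S f. red_edge E {x\<in>S. f x = f u} g} \<le> m"
  shows "red_maxdeg_le E (parts S f) m"
  unfolding red_maxdeg_le_def
proof
  fix P assume "P \<in> parts S f"
  then obtain u where "u \<in> S" "P = {x\<in>S. f x = f u}" unfolding parts_def by blast
  then show "card {P' \<in> parts S f. red_edge E P P'} \<le> m" using assms by blast
qed

lemma red_maxdeg_mono: "red_maxdeg_le E X d \<Longrightarrow> d \<le> d' \<Longrightarrow> red_maxdeg_le E X d'"
  unfolding red_maxdeg_le_def using le_trans by blast

lemma card_Sigma_Pow:
  assumes "finite I" "card I \<le> n" "\<And>b. b \<in> I \<Longrightarrow> finite (R b) \<and> card (R b) \<le> s"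
  shows "finite (Sigma I (\<lambda>b. Pow (R b))) \<and> card (Sigma I (\<lambda>b. Pow (R b))) \<le> n * 2 ^ s"
proof
  show "finite (Sigma I (\<lambda>b. Pow (R b)))" using assms(1,3) by auto
  have "card (Sigma I (\<lambda>b. Pow (R b))) = (\<Sum>b\<in>I. card (Pow (R b)))"
    using assms(1,3) by (simp add: card_SigmaI)
  also have "\<dots> = (\<Sum>b\<in>I. 2 ^ card (R b))" using assms(3) by (simp add: card_Pow)
  also have "\<dots> \<le> (\<Sum>b\<in>I. 2 ^ s)"
  proof (rule sum_mono)
    fix b assume "b \<in> I"
    then show "(2::nat) ^ card (R b) \<le> 2 ^ s" using assms(3) by (simp add: power_increasing)
  qed
  also have "\<dots> = card I * 2 ^ s" by simp
  also have "\<dots> \<le> n * 2 ^ s" using assms(2) by simp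
  finally show "card (Sigma I (\<lambda>b. Pow (R b))) \<le> n * 2 ^ s" .
qed

context LW
begin

definition inb :: "nat \<Rightarrow> 'a set \<Rightarrow> 'a \<Rightarrow> bool" where
  "inb k P u \<longleftrightarrow> u \<in> V \<and> (Suc k \<le> dep u \<or> (dep u = k \<and> children V r par u \<subseteq> P))"
definition bidw :: "nat \<Rightarrow> 'a set \<Rightarrow> 'a \<Rightarrow> 'a" where
  "bidw k P w = (if w \<in> P then par w else w)"
definition bid :: "nat \<Rightarrow> 'a set \<Rightarrow> 'a \<Rightarrow> 'a" where
  "bid k P u = (if dep u = k then u else bidw k P (at u (Suc k)))"
definition UU :: "nat \<Rightarrow> 'a set \<Rightarrow> 'a set" where
  "UU k P = {x\<in>V. \<not> inb k P x}"
definition key :: "nat \<Rightarrow> 'a set \<Rightarrow> 'a \<Rightarrow> ('a \<times> 'a set) + 'a" where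
  "key k P u = (if inb k P u then Inl (bid k P u, {x\<in>UU k P. E u x}) else Inr u)"
definition RR :: "nat \<Rightarrow> 'a set \<Rightarrow> 'a \<Rightarrow> 'a set" where
  "RR k P b = {x\<in>UU k P. \<exists>y. inb k P y \<and> bid k P y = b \<and> E y x}"
definition adj :: "nat \<Rightarrow> 'a set \<Rightarrow> 'a \<Rightarrow> 'a set" where
  "adj k P b = {bid k P y | y. y \<in> L (Suc k) \<and> bid k P y \<noteq> b \<and>
      (\<exists>a\<in>L (Suc k). bid k P a = b \<and> (consec a y \<or> consec y a))}"
definition prefix :: "nat \<Rightarrow> 'a set \<Rightarrow> bool" where
  "prefix k P \<longleftrightarrow> P \<subseteq> L (Suc k) \<and> (\<forall>b c. lt b c \<longrightarrow> c \<in> P \<longrightarrow> b \<in> P)"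

lemma L_iff: "x \<in> L n \<longleftrightarrow> x \<in> V \<and> dep x = n" unfolding layer_def by simp

lemma ch_iff: "c \<in> children V r par x \<longleftrightarrow> c \<in> V \<and> c \<noteq> r \<and> par c = x"
  unfolding children_def by simp

lemma ch_dep: "c \<in> children V r par x \<Longrightarrow> dep c = Suc (dep x)"
  using ch_iff dep_par by auto

lemma ch_ne: "x \<in> V \<Longrightarrow> children V r par x \<noteq> {}"
  using neat_ch ch_iff by blast

lemma inb_V: "inb k P y \<Longrightarrow> y \<in> V \<and> k \<le> dep y" unfolding inb_def by auto

lemma UU_iff: "x \<in> UU k P \<longleftrightarrow> x \<in> V \<and> \<not> inb k P x" unfolding UU_def by simp

lemma UU_dep: "x \<in> UU k P \<Longrightarrow> dep x \<le> k" unfolding UU_def inb_def by auto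

lemma bid_L: assumes "w \<in> L (Suc k)" shows "bid k P w = bidw k P w"
proof -
  have w: "w \<in> V" "dep w = Suc k" using assms L_iff by auto
  have "at w (Suc k) = w" using at_self[of w] w(2) by simp
  then show ?thesis unfolding bid_def using w(2) by simp
qed

lemma inb_k: "inb k P y \<Longrightarrow> dep y = k \<Longrightarrow> bid k P y = y \<and> children V r par y \<subseteq> P"
  unfolding inb_def bid_def by auto

lemma bid_deep: assumes "inb k P y" "dep y \<noteq> k" shows "bid k P y = bid k P (at y (Suc k))"
proof -
  have y: "y \<in> V" "Suc k \<le> dep y" using assms inb_V by fastforce+
  have "at y (Suc k) \<in> L (Suc k)" using at_V[OF y] L_iff by simp
  then show ?thesis unfolding bid_def using assms(2) bid_L by (simp add: bid_L bid_def)
qed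

lemma block_desc:
  assumes "inb k P y" "P \<subseteq> L (Suc k)"
  shows "anc (bid k P y) y \<and> k \<le> dep (bid k P y) \<and> bid k P y \<in> V"
proof (cases "dep y = k")
  case True
  then show ?thesis using inb_k[OF assms(1)] anc_refl inb_V[OF assms(1)] by simp
next
  case False
  then have y: "y \<in> V" "Suc k \<le> dep y" using assms inb_V by fastforce+
  define w where "w = at y (Suc k)"
  have w: "w \<in> V" "dep w = Suc k" using at_V[OF y] w_def by auto
  have b: "bid k P y = bidw k P w" unfolding bid_def w_def using False by simp
  show ?thesis
  proof (cases "w \<in> P")
    case True
    then have "bid k P y = at y k" using b par_at[OF y] w_def unfolding bidw_def by simp
    then show ?thesis using at_anc[OF y(1)] at_V[OF y(1)] y(2) by simp
  next
    case False
    then have "bid k P y = w" using b unfolding bidw_def by simp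
    then show ?thesis using at_anc[OF y] w w_def by simp
  qed
qed

lemma RR_sub:
  assumes "x \<in> RR k P b" "P \<subseteq> L (Suc k)"
  shows "b \<in> V \<and> x \<in> Xf b \<union> {b} \<union> {z. consec b z} \<union> {z. consec z b}"
proof -
  obtain y where y: "inb k P y" "bid k P y = b" "E y x" and x: "x \<in> UU k P"
    using assms(1) unfolding RR_def by blast
  have xV: "x \<in> V" "dep x \<le> k" using x UU_iff UU_dep by auto
  have bd: "anc b y" "k \<le> dep b" "b \<in> V" using block_desc[OF y(1) assms(2)] y(2) by auto
  have yV: "y \<in> V" "k \<le> dep y" using inb_V[OF y(1)] by auto
  show ?thesis
  proof (cases "dep x = dep y")
    case True
    then have "dep y = k" using xV yV by simp
    then have "y = b" using inb_k[OF y(1)] y(2) by simp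
    then have "consec b x \<or> consec x b" using L_E[OF yV(1) xV(1)] True y(3) by simp
    then show ?thesis using bd by blast
  next
    case False
    show ?thesis
    proof (cases "anc b x")
      case True
      then have "dep b \<le> dep x" using at_dep_ge[OF xV(1)] by blast
      then have "dep b = dep x" using xV bd by simp
      then have "b = x" using anc_same[OF xV(1) True] by simp
      then show ?thesis using bd by blast
    next
      case nb: False
      have "x \<in> Xf b" using Xf_ur[OF bd(3) y(3)] False bd(1) nb by metis
      then show ?thesis using bd by blast
    qed
  qed
qed

lemma consec_set_r: assumes "b \<in> V" shows "finite {z. consec b z} \<and> card {z. consec b z} \<le> 1"
proof
  have "{z. consec b z} \<subseteq> L (dep b)" using consec_lt lt_V L_iff by fastforce
  then show f: "finite {z. consec b z}" using L_fin finite_subset by blast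
  show "card {z. consec b z} \<le> 1" using card_le_Suc0_iff_eq[OF f] consec_uniq_r by auto
qed

lemma consec_set_l: assumes "b \<in> V" shows "finite {z. consec z b} \<and> card {z. consec z b} \<le> 1"
proof
  have "{z. consec z b} \<subseteq> L (dep b)" using consec_lt lt_V L_iff by fastforce
  then show f: "finite {z. consec z b}" using L_fin finite_subset by blast
  show "card {z. consec z b} \<le> 1" using card_le_Suc0_iff_eq[OF f] consec_uniq_l by auto
qed

lemma RR_bound:
  assumes "P \<subseteq> L (Suc k)"
  shows "finite (RR k P b) \<and> card (RR k P b) \<le> t + 3"
proof (cases "RR k P b = {}")
  case True then show ?thesis by simp
next
  case False
  then obtain x where "x \<in> RR k P b" by blast
  then have bV: "b \<in> V" using RR_sub[OF _ assms] by blast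
  define A where "A = Xf b \<union> {b} \<union> {z. consec b z} \<union> {z. consec z b}"
  have sub: "RR k P b \<subseteq> A" unfolding A_def using RR_sub[OF _ assms] by blast
  have f1: "finite (Xf b)" "card (Xf b) \<le> t" using Xf_fin Xf_card bV by auto
  have f2: "finite {z. consec b z}" "card {z. consec b z} \<le> 1" using consec_set_r[OF bV] by auto
  have f3: "finite {z. consec z b}" "card {z. consec z b} \<le> 1" using consec_set_l[OF bV] by auto
  have fA: "finite A" unfolding A_def using f1 f2 f3 by simp
  have "card A \<le> card (Xf b \<union> {b} \<union> {z. consec b z}) + card {z. consec z b}"
    unfolding A_def by (rule card_Un_le)
  also have "\<dots> \<le> card (Xf b \<union> {b}) + card {z. consec b z} + card {z. consec z b}"
    using card_Un_le[of "Xf b \<union> {b}" "{z. consec b z}"] by simp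
  also have "\<dots> \<le> card (Xf b) + card {b} + card {z. consec b z} + card {z. consec z b}"
    using card_Un_le[of "Xf b" "{b}"] by simp
  also have "\<dots> \<le> t + 3" using f1 f2 f3 by simp
  finally have "card A \<le> t + 3" .
  then show ?thesis using sub fA card_mono[OF fA sub] finite_subset[OF sub fA] by simp
qed

lemma same_block_anc:
  assumes x: "inb k P x" and y: "inb k P y" and a: "anc x y" and d: "dep x < dep y"
  shows "bid k P x = bid k P y"
proof -
  have xV: "x \<in> V" "k \<le> dep x" using inb_V[OF x] by auto
  have yV: "y \<in> V" "k \<le> dep y" using inb_V[OF y] by auto
  have dy: "Suc k \<le> dep y" "dep y \<noteq> k" using xV d by auto
  define w where "w = at y (Suc k)"
  have w: "w \<in> V" "dep w = Suc k" using at_V[OF yV(1) dy(1)] w_def by auto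
  have by_: "bid k P y = bidw k P w" using bid_deep[OF y dy(2)] bid_L[of w k P] w L_iff w_def by simp
  show ?thesis
  proof (cases "dep x = k")
    case True
    have ch: "children V r par x \<subseteq> P" "bid k P x = x" using inb_k[OF x True] by auto
    have "at y k = x" using anc_char[OF yV(1)] a True by simp
    then have pw: "par w = x" using par_at[OF yV(1) dy(1)] w_def by simp
    have "w \<noteq> r" using w dep_root by auto
    then have "w \<in> children V r par x" using ch_iff w pw by simp
    then have "w \<in> P" using ch by blast
    then show ?thesis using by_ ch pw unfolding bidw_def by simp
  next
    case False
    then have dx: "Suc k \<le> dep x" using xV by simp
    have "at x (Suc k) = w" using at_anc_eq[OF yV(1) a dx] w_def by simp
    then have "bid k P x = bidw k P w" using bid_deep[OF x False] bid_L[of w k P] w L_iff by simp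
    then show ?thesis using by_ by simp
  qed
qed

lemma bidw_dep: assumes "w \<in> L (Suc k)" "P \<subseteq> L (Suc k)"
  shows "(w \<in> P \<longrightarrow> bidw k P w = par w \<and> dep (par w) = k \<and> par w \<in> V) \<and> (w \<notin> P \<longrightarrow> bidw k P w = w)"
proof -
  have w: "w \<in> V" "dep w = Suc k" using assms(1) L_iff by auto
  then have "w \<noteq> r" using dep_root by auto
  then show ?thesis using dep_par[OF w(1)] w par_V unfolding bidw_def by auto
qed

lemma interval:
  assumes pre: "prefix k P" and abc: "a \<in> L (Suc k)" "b \<in> L (Suc k)" "c \<in> L (Suc k)"
    and eq: "bid k P a = bid k P c" and ab: "lt a b" and bc: "lt b c"
  shows "bid k P b = bid k P a"
proof -
  have PL: "P \<subseteq> L (Suc k)" using pre unfolding prefix_def by blast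
  have cl: "\<And>x y. lt x y \<Longrightarrow> y \<in> P \<Longrightarrow> x \<in> P" using pre unfolding prefix_def by blast
  have V: "a \<in> V" "b \<in> V" "c \<in> V" "dep a = Suc k" "dep b = Suc k" "dep c = Suc k" using abc L_iff by auto
  have nr: "a \<noteq> r" "b \<noteq> r" "c \<noteq> r" using V dep_root by auto
  have ba: "bid k P a = bidw k P a" "bid k P b = bidw k P b" "bid k P c = bidw k P c"
    using bid_L abc by auto
  show ?thesis
  proof (cases "a \<in> P")
    case True
    have pa: "bidw k P a = par a" "dep (par a) = k" using bidw_dep[OF abc(1) PL] True by auto
    have "c \<in> P"
    proof (rule ccontr)
      assume "c \<notin> P"
      then have "bidw k P c = c" using bidw_dep[OF abc(3) PL] by auto
      then show False using eq ba pa V by simp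
    qed
    then have pc: "bidw k P c = par c" using bidw_dep[OF abc(3) PL] by auto
    have "b \<in> P" using cl[OF bc \<open>c \<in> P\<close>] .
    then have pb: "bidw k P b = par b" using bidw_dep[OF abc(2) PL] by auto
    have pac: "par a = par c" using eq ba pa pc by simp
    have pV: "par a \<in> V" "par b \<in> V" "dep (par b) = dep (par a)"
      using par_V V nr dep_par by auto
    have "\<not> lt (par b) (par a)" using lt_par[OF V(2) V(1) nr(2) nr(1)] ab lt_asym by blast
    moreover have "\<not> lt (par a) (par b)" using lt_par[OF V(3) V(2) nr(3) nr(2)] bc lt_asym pac by metis
    ultimately have "par b = par a" using lt_total[OF pV(2) pV(1) pV(3)] by blast
    then show ?thesis using ba pa pb by simp
  next
    case False
    then have "bidw k P a = a" using bidw_dep[OF abc(1) PL] by auto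
    have "c = a"
    proof (cases "c \<in> P")
      case True
      then have "bidw k P c = par c" "dep (par c) = k" using bidw_dep[OF abc(3) PL] by auto
      then show ?thesis using eq ba \<open>bidw k P a = a\<close> V by simp
    next
      case False
      then have "bidw k P c = c" using bidw_dep[OF abc(3) PL] by auto
      then show ?thesis using eq ba \<open>bidw k P a = a\<close> by simp
    qed
    then show ?thesis using ab bc lt_asym by blast
  qed
qed

end



context LW
begin

abbreviation "cc \<equiv> (2::nat) ^ (t + 3)"

lemma adj_card:
  assumes pre: "prefix k P"
  shows "finite (adj k P b) \<and> card (adj k P b) \<le> 2"
proof -
  define T where "T = {a \<in> L (Suc k). bid k P a = b}"
  define Rr where "Rr = {y \<in> L (Suc k). bid k P y \<noteq> b \<and> (\<exists>a\<in>T. consec a y)}"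
  define Rl where "Rl = {y \<in> L (Suc k). bid k P y \<noteq> b \<and> (\<exists>a\<in>T. consec y a)}"
  have sub: "adj k P b \<subseteq> bid k P ` (Rr \<union> Rl)"
  proof
    fix z assume "z \<in> adj k P b"
    then obtain y a where y: "z = bid k P y" "y \<in> L (Suc k)" "bid k P y \<noteq> b" "a \<in> L (Suc k)"
      "bid k P a = b" "consec a y \<or> consec y a"
      unfolding adj_def by blast
    have "a \<in> T" using y unfolding T_def by simp
    then have "y \<in> Rr \<union> Rl" using y unfolding Rr_def Rl_def by blast
    then show "z \<in> bid k P ` (Rr \<union> Rl)" using y(1) by blast
  qed
  have afterR: "lt c y" if y: "y \<in> Rr" and c: "c \<in> T" for y c
  proof -
    obtain a where a: "a \<in> T" "consec a y" using y unfolding Rr_def by blast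
    have yy: "y \<in> L (Suc k)" "bid k P y \<noteq> b" using y unfolding Rr_def by auto
    have cc: "c \<in> L (Suc k)" "bid k P c = b" using c unfolding T_def by auto
    have aa: "a \<in> L (Suc k)" "bid k P a = b" using a unfolding T_def by auto
    have "c \<noteq> y" using yy cc by auto
    moreover have "\<not> lt y c"
    proof
      assume "lt y c"
      then have "bid k P y = bid k P a"
        using interval[OF pre aa(1) yy(1) cc(1)] aa cc consec_lt[OF a(2)] by simp
      then show False using yy aa by simp
    qed
    ultimately show "lt c y" using lt_total yy(1) cc(1) L_iff by metis
  qed
  have beforeL: "lt y c" if y: "y \<in> Rl" and c: "c \<in> T" for y c
  proof -
    obtain a where a: "a \<in> T" "consec y a" using y unfolding Rl_def by blast
    have yy: "y \<in> L (Suc k)" "bid k P y \<noteq> b" using y unfolding Rl_def by auto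
    have cc: "c \<in> L (Suc k)" "bid k P c = b" using c unfolding T_def by auto
    have aa: "a \<in> L (Suc k)" "bid k P a = b" using a unfolding T_def by auto
    have "c \<noteq> y" using yy cc by auto
    moreover have "\<not> lt c y"
    proof
      assume "lt c y"
      then have "bid k P y = bid k P c"
        using interval[OF pre cc(1) yy(1) aa(1)] aa cc consec_lt[OF a(2)] by simp
      then show False using yy cc by simp
    qed
    ultimately show "lt y c" using lt_total yy(1) cc(1) L_iff by metis
  qed
  have noR: "\<not> lt y1 y2" if yy: "y1 \<in> Rr" "y2 \<in> Rr" for y1 y2
  proof
    assume l: "lt y1 y2"
    obtain a2 where a2: "a2 \<in> T" "consec a2 y2" using yy(2) unfolding Rr_def by blast
    have "lt a2 y1" using afterR[OF yy(1) a2(1)] .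
    then show False using consec_no[OF a2(2) _ l] by blast
  qed
  have noL: "\<not> lt y1 y2" if yy: "y1 \<in> Rl" "y2 \<in> Rl" for y1 y2
  proof
    assume l: "lt y1 y2"
    obtain a1 where a1: "a1 \<in> T" "consec y1 a1" using yy(1) unfolding Rl_def by blast
    have "lt y2 a1" using beforeL[OF yy(2) a1(1)] .
    then show False using consec_no[OF a1(2) l] by blast
  qed
  have fRr: "finite Rr" unfolding Rr_def using L_fin by simp
  have fRl: "finite Rl" unfolding Rl_def using L_fin by simp
  have c1: "card Rr \<le> 1"
  proof -
    have "\<forall>y1\<in>Rr. \<forall>y2\<in>Rr. y1 = y2"
    proof (intro ballI)
      fix y1 y2 assume y: "y1 \<in> Rr" "y2 \<in> Rr"
      then have "y1 \<in> L (Suc k)" "y2 \<in> L (Suc k)" unfolding Rr_def by auto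
      then show "y1 = y2" using lt_total noR[OF y] noR[OF y(2) y(1)] L_iff by metis
    qed
    then show ?thesis using card_le_Suc0_iff_eq[OF fRr] by simp
  qed
  have c2: "card Rl \<le> 1"
  proof -
    have "\<forall>y1\<in>Rl. \<forall>y2\<in>Rl. y1 = y2"
    proof (intro ballI)
      fix y1 y2 assume y: "y1 \<in> Rl" "y2 \<in> Rl"
      then have "y1 \<in> L (Suc k)" "y2 \<in> L (Suc k)" unfolding Rl_def by auto
      then show "y1 = y2" using lt_total noL[OF y] noL[OF y(2) y(1)] L_iff by metis
    qed
    then show ?thesis using card_le_Suc0_iff_eq[OF fRl] by simp
  qed
  have fU: "finite (bid k P ` (Rr \<union> Rl))" using fRr fRl by simp
  have "card (adj k P b) \<le> card (bid k P ` (Rr \<union> Rl))" by (rule card_mono[OF fU sub])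
  also have "\<dots> \<le> card (Rr \<union> Rl)" by (rule card_image_le) (use fRr fRl in simp)
  also have "\<dots> \<le> card Rr + card Rl" by (rule card_Un_le)
  finally have "card (adj k P b) \<le> 2" using c1 c2 by simp
  then show ?thesis using finite_subset[OF sub fU] by simp
qed

lemma consec_blocks:
  assumes PL: "P \<subseteq> L (Suc k)" and x: "inb k P x" and y: "inb k P y"
    and ne: "bid k P x \<noteq> bid k P y" and cxy: "consec x y"
  shows "\<exists>a b. a \<in> L (Suc k) \<and> b \<in> L (Suc k) \<and> bid k P a = bid k P x \<and> bid k P b = bid k P y \<and> consec a b"
proof -
  have xV: "x \<in> V" "k \<le> dep x" using inb_V[OF x] by auto
  have yV: "y \<in> V" "k \<le> dep y" using inb_V[OF y] by auto
  have dxy: "dep x = dep y" using lt_V[OF consec_lt[OF cxy]] by simp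
  show ?thesis
  proof (cases "dep x = k")
    case False
    then have d: "Suc k \<le> dep x" "dep y \<noteq> k" using xV dxy by auto
    define a where "a = at x (Suc k)"
    define b where "b = at y (Suc k)"
    have aL: "a \<in> L (Suc k)" using at_V[OF xV(1) d(1)] L_iff a_def by simp
    have bL: "b \<in> L (Suc k)" using at_V[OF yV(1)] d(1) dxy L_iff b_def by simp
    have ba: "bid k P x = bid k P a" using bid_deep[OF x False] a_def by simp
    have bb: "bid k P y = bid k P b" using bid_deep[OF y d(2)] b_def by simp
    have "a \<noteq> b" using ne ba bb by auto
    then have "consec a b" using consec_up[OF xV(1) yV(1) dxy d(1) cxy] a_def b_def by simp
    show ?thesis
      by (rule exI[of _ a], rule exI[of _ b]) (intro conjI aL bL ba[symmetric] bb[symmetric] \<open>consec a b\<close>)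
  next
    case True
    have kx: "bid k P x = x" "children V r par x \<subseteq> P" using inb_k[OF x True] by auto
    have ky: "bid k P y = y" "children V r par y \<subseteq> P" using inb_k[OF y] True dxy by auto
    obtain a b where ab: "a \<in> V" "b \<in> V" "dep a = Suc k" "dep b = Suc k" "at a (dep x) = x"
      "at b (dep x) = y" "consec a b"
      using consec_down[OF cxy, of "Suc k"] True by auto
    have nr: "a \<noteq> r" "b \<noteq> r" using ab dep_root by auto
    have aa: "at a (Suc k) = a" "at b (Suc k) = b" using at_self ab by metis+
    have "par (at a (Suc k)) = at a k" using par_at[OF ab(1), of k] ab(3) by simp
    then have pa1: "par a = x" using aa(1) ab(5) True by simp
    have "par (at b (Suc k)) = at b k" using par_at[OF ab(2), of k] ab(4) by simp
    then have pa2: "par b = y" using aa(2) ab(6) True by simp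
    note pa = pa1 pa2
    have "a \<in> children V r par x" "b \<in> children V r par y" using ch_iff ab nr pa by auto
    then have "a \<in> P" "b \<in> P" using kx ky by auto
    have aL: "a \<in> L (Suc k)" "b \<in> L (Suc k)" using ab L_iff by auto
    have eqs: "bid k P a = bid k P x" "bid k P b = bid k P y"
      using bid_L[OF aL(1)] bid_L[OF aL(2)] \<open>a \<in> P\<close> \<open>b \<in> P\<close> pa kx ky unfolding bidw_def by auto
    show ?thesis
      by (intro exI[of _ a] exI[of _ b] conjI aL ab(7) eqs)
  qed
qed

lemma adjI:
  assumes "y \<in> L (Suc k)" "bid k P y \<noteq> b" "a \<in> L (Suc k)" "bid k P a = b" "consec a y \<or> consec y a"
  shows "bid k P y \<in> adj k P b"
proof -
  have "y \<in> L (Suc k) \<and> bid k P y \<noteq> b \<and> (\<exists>a\<in>L (Suc k). bid k P a = b \<and> (consec a y \<or> consec y a))"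
    using assms by blast
  then show ?thesis unfolding adj_def by (intro CollectI exI[of _ y] conjI refl) simp_all
qed

lemma block_adj:
  assumes PL: "P \<subseteq> L (Suc k)" and u: "inb k P u" and u': "inb k P u'"
    and ne: "bid k P u \<noteq> bid k P u'" and e: "E u u'"
  shows "bid k P u' \<in> adj k P (bid k P u)"
proof -
  have uV: "u \<in> V" "u' \<in> V" using inb_V u u' by auto
  have dd: "dep u = dep u'"
  proof (rule ccontr)
    assume nd: "dep u \<noteq> dep u'"
    then have "anc u u' \<or> anc u' u" using nonlayer e by blast
    then show False
    proof
      assume a: "anc u u'"
      then have "dep u < dep u'" using at_dep_ge[OF uV(2) a] nd by simp
      then show False using same_block_anc[OF u u' a] ne by simp
    next
      assume a: "anc u' u"
      then have "dep u' < dep u" using at_dep_ge[OF uV(1) a] nd by simp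
      then show False using same_block_anc[OF u' u a] ne by simp
    qed
  qed
  have "consec u u' \<or> consec u' u" using L_E[OF uV dd] e by simp
  then show ?thesis
  proof
    assume c: "consec u u'"
    obtain a b where ab: "a \<in> L (Suc k)" "b \<in> L (Suc k)" "bid k P a = bid k P u" "bid k P b = bid k P u'"
      "consec a b" using consec_blocks[OF PL u u' ne c] by blast
    have "bid k P b \<in> adj k P (bid k P u)" using adjI[OF ab(2) _ ab(1) ab(3)] ab(4,5) ne by simp
    then show ?thesis using ab(4) by simp
  next
    assume c: "consec u' u"
    obtain a b where ab: "a \<in> L (Suc k)" "b \<in> L (Suc k)" "bid k P a = bid k P u'" "bid k P b = bid k P u"
      "consec a b" using consec_blocks[OF PL u' u _ c] ne by metis
    have "bid k P a \<in> adj k P (bid k P u)" using adjI[OF ab(1) _ ab(2) ab(4)] ab(3,5) ne by simp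
    then show ?thesis using ab(3) by simp
  qed
qed

lemma key_Inr: "key k P x = Inr y \<Longrightarrow> x = y \<and> \<not> inb k P x"
  unfolding key_def by (cases "inb k P x") auto

lemma key_Inl: "key k P x = Inl (b, s) \<Longrightarrow> inb k P x \<and> bid k P x = b \<and> s = {z\<in>UU k P. E x z}"
  unfolding key_def by (cases "inb k P x") auto

lemma key_inb: "inb k P x \<Longrightarrow> key k P x = Inl (bid k P x, {z\<in>UU k P. E x z})"
  unfolding key_def by simp

lemma key_ninb: "\<not> inb k P x \<Longrightarrow> key k P x = Inr x"
  unfolding key_def by simp

lemma homog:
  assumes "key k P x = key k P y" "z \<in> UU k P"
  shows "E x z \<longleftrightarrow> E y z"
proof (cases "inb k P x")
  case True
  then have "key k P y = Inl (bid k P x, {z\<in>UU k P. E x z})" using assms(1) key_inb by simp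
  then have "{z\<in>UU k P. E x z} = {z\<in>UU k P. E y z}" using key_Inl by blast
  then show ?thesis using assms(2) by blast
next
  case False
  then have "key k P y = Inr x" using assms(1) key_ninb by simp
  then show ?thesis using key_Inr by blast
qed

end

locale LWS = LW +
  fixes S :: "'a set"
  assumes S_fin: "finite S" and S_V: "S \<subseteq> V"
begin

abbreviation "Pi k P \<equiv> parts S (key k P)"

lemma red_key:
  assumes PL: "P \<subseteq> L (Suc k)" and u: "u \<in> S" "u' \<in> S"
    and red: "red_edge E {x\<in>S. key k P x = key k P u} {x\<in>S. key k P x = key k P u'}"
  shows "inb k P u \<and> inb k P u' \<and> (bid k P u' = bid k P u \<or> bid k P u' \<in> adj k P (bid k P u))"
proof -
  obtain u1 v1 u2 v2 where w: "u1 \<in> S" "v1 \<in> S" "u2 \<in> S" "v2 \<in> S"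
    "key k P u1 = key k P u" "key k P v1 = key k P u" "key k P u2 = key k P u'" "key k P v2 = key k P u'"
    "E u1 u2" "\<not> E v1 v2"
    using red unfolding red_edge_def by blast
  have iu': "inb k P u'"
  proof (rule ccontr)
    assume n: "\<not> inb k P u'"
    then have "u2 = u'" "v2 = u'" using w(7,8) key_ninb key_Inr by metis+
    have "u' \<in> UU k P" using n u S_V UU_iff by blast
    then have "E u1 u' \<longleftrightarrow> E v1 u'" using homog[of k P u1 v1] w(5,6) by simp
    then show False using w(9,10) \<open>u2 = u'\<close> \<open>v2 = u'\<close> by simp
  qed
  have iu: "inb k P u"
  proof (rule ccontr)
    assume n: "\<not> inb k P u"
    then have "u1 = u" "v1 = u" using w(5,6) key_ninb key_Inr by metis+
    have "u \<in> UU k P" using n u S_V UU_iff by blast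
    then have "E u2 u \<longleftrightarrow> E v2 u" using homog[of k P u2 v2] w(7,8) by simp
    then show False using w(9,10) \<open>u1 = u\<close> \<open>v1 = u\<close> E_sym by blast
  qed
  have i1: "inb k P u1" "bid k P u1 = bid k P u" using w(5) key_inb[OF iu] key_Inl by metis+
  have i2: "inb k P u2" "bid k P u2 = bid k P u'" using w(7) key_inb[OF iu'] key_Inl by metis+
  show ?thesis
  proof (cases "bid k P u' = bid k P u")
    case False
    then have "bid k P u2 \<in> adj k P (bid k P u1)" using block_adj[OF PL i1(1) i2(1)] i1 i2 w(9) by simp
    then show ?thesis using iu iu' i1 i2 by simp
  qed (use iu iu' in simp)
qed

lemma red_bound:
  assumes pre: "prefix k P"
  shows "red_maxdeg_le E (Pi k P) (3 * cc)"
proof (rule parts_red_le)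
  have PL: "P \<subseteq> L (Suc k)" using pre unfolding prefix_def by blast
  fix u assume u: "u \<in> S"
  show "card {g\<in>Pi k P. red_edge E {x\<in>S. key k P x = key k P u} g} \<le> 3 * cc"
  proof (cases "inb k P u")
    case False
    show ?thesis
      by (rule parts_red[OF u, of _ _ "{}"]) (use red_key[OF PL u] False in auto)
  next
    case True
    define I where "I = insert (bid k P u) (adj k P (bid k P u))"
    have fI: "finite I" "card I \<le> 3"
    proof -
      have a: "finite (adj k P (bid k P u))" "card (adj k P (bid k P u)) \<le> 2" using adj_card[OF pre] by auto
      then show "finite I" unfolding I_def by simp
      have "card I \<le> Suc (card (adj k P (bid k P u)))" unfolding I_def by (rule card_insert_le_m1) (use a in auto)
      then show "card I \<le> 3" using a by simp
    qed
    have sg: "finite (Sigma I (\<lambda>b. Pow (RR k P b))) \<and> card (Sigma I (\<lambda>b. Pow (RR k P b))) \<le> 3 * 2 ^ (t+3)"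
      by (rule card_Sigma_Pow[OF fI]) (use RR_bound[OF PL] in auto)
    define K :: "('a \<times> 'a set + 'a) set" where "K = Inl ` Sigma I (\<lambda>b. Pow (RR k P b))"
    have fK1: "finite K" unfolding K_def using sg by simp
    have "card K \<le> card (Sigma I (\<lambda>b. Pow (RR k P b)))" unfolding K_def
      by (rule card_image_le) (use sg in simp)
    then have fK2: "card K \<le> 3 * cc" using sg by linarith
    note fK = fK1 fK2
    show ?thesis
    proof (rule parts_red[OF u _ fK])
      fix u' assume u': "u' \<in> S" and rd: "red_edge E {x\<in>S. key k P x = key k P u} {x\<in>S. key k P x = key k P u'}"
      have rk: "inb k P u'" "bid k P u' \<in> I" using red_key[OF PL u u' rd] unfolding I_def by auto
      have "{z\<in>UU k P. E u' z} \<subseteq> RR k P (bid k P u')" unfolding RR_def using rk(1) by blast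
      then show "key k P u' \<in> K" unfolding K_def using key_inb[OF rk(1)] rk(2) by blast
    qed
  qed
qed

end



lemma parts_cong: "(\<And>x. x \<in> S \<Longrightarrow> f x = g x) \<Longrightarrow> parts S f = parts S g"
  unfolding parts_def by (intro image_cong refl) auto

context LW
begin

abbreviation "Dc \<equiv> (2 + 2 * cc) * (3 * cc + 1)"

lemma inb_mono: "P \<subseteq> P' \<Longrightarrow> inb k P x \<Longrightarrow> inb k P' x"
  unfolding inb_def by blast

lemma inb_new:
  assumes "inb k (insert w P) x" "\<not> inb k P x"
  shows "x = par w"
proof -
  have x: "x \<in> V" "\<not> Suc k \<le> dep x" using assms unfolding inb_def by auto
  then have "dep x = k" "children V r par x \<subseteq> insert w P" using assms(1) unfolding inb_def by auto
  moreover have "\<not> children V r par x \<subseteq> P" using assms(2) x \<open>dep x = k\<close> unfolding inb_def by auto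
  ultimately obtain c where c: "c \<in> children V r par x" "c \<notin> P" "c \<in> insert w P"
    unfolding subset_iff by blast
  then have "c = w" by simp
  moreover have "par c = x" using ch_iff[THEN iffD1, OF c(1)] by simp
  ultimately show ?thesis by simp
qed

lemma bid_step:
  assumes x: "inb k P x" and w: "w \<in> L (Suc k)" "w \<notin> P" and PL: "P \<subseteq> L (Suc k)"
  shows "bid k (insert w P) x = (if bid k P x = w then par w else bid k P x)"
proof -
  have wV: "w \<in> V" "dep w = Suc k" using w L_iff by auto
  show ?thesis
  proof (cases "dep x = k")
    case True
    then have "bid k (insert w P) x = x" "bid k P x = x" unfolding bid_def by auto
    moreover have "x \<noteq> w" using True wV by auto
    ultimately show ?thesis by simp
  next
    case False
    have xV: "x \<in> V" "Suc k \<le> dep x" using inb_V[OF x] False by auto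
    define a where "a = at x (Suc k)"
    have aL: "a \<in> L (Suc k)" using at_V[OF xV] L_iff a_def by simp
    have b1: "bid k (insert w P) x = bidw k (insert w P) a" unfolding bid_def a_def using False by simp
    have b2: "bid k P x = bidw k P a" unfolding bid_def a_def using False by simp
    show ?thesis
    proof (cases "a = w")
      case True
      then show ?thesis using b1 b2 w(2) unfolding bidw_def by simp
    next
      case False
      have "bidw k (insert w P) a = bidw k P a" using False unfolding bidw_def by simp
      moreover have "bidw k P a \<noteq> w"
      proof (cases "a \<in> P")
        case True
        then have "dep (bidw k P a) = k" using bidw_dep[OF aL PL] by auto
        then show ?thesis using wV by auto
      next
        case nP: False
        then show ?thesis using bidw_dep[OF aL PL] False by auto
      qed
      ultimately show ?thesis using b1 b2 by simp
    qed
  qed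
qed

lemma UU_step: "UU k (insert w P) \<subseteq> UU k P"
  unfolding UU_def using inb_mono[of P "insert w P"] by blast

end

context LWS
begin

lemma refine_step:
  assumes w: "w \<in> L (Suc k)" "w \<notin> P" and PL: "P \<subseteq> L (Suc k)"
    and eq: "key k P x = key k P y"
  shows "key k (insert w P) x = key k (insert w P) y"
proof (cases "inb k P x")
  case True
  have ky: "key k P y = Inl (bid k P x, {z\<in>UU k P. E x z})" using eq key_inb[OF True] by simp
  then have y: "inb k P y" "bid k P y = bid k P x" "{z\<in>UU k P. E x z} = {z\<in>UU k P. E y z}"
    using key_Inl by metis+
  have ix: "inb k (insert w P) x" "inb k (insert w P) y" using inb_mono True y(1) by blast+
  have bb: "bid k (insert w P) x = bid k (insert w P) y"
    using bid_step[OF True w PL] bid_step[OF y(1) w PL] y(2) by simp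
  have "{z\<in>UU k (insert w P). E x z} = {z\<in>UU k (insert w P). E y z}"
    using y(3) UU_step[of k w P] by blast
  then show ?thesis using key_inb[OF ix(1)] key_inb[OF ix(2)] bb by simp
next
  case False
  then have "key k P y = Inr x" using eq key_ninb by simp
  then have "x = y" using key_Inr by blast
  then show ?thesis by simp
qed

lemma keys_step:
  assumes w: "w \<in> L (Suc k)" "w \<notin> P" and PL: "P \<subseteq> L (Suc k)" and u: "u \<in> S"
  shows "key k P ` {x\<in>S. key k (insert w P) x = key k (insert w P) u} \<subseteq>
     {Inr u, Inr (par w)} \<union> Inl ` Sigma {bid k (insert w P) u, w} (\<lambda>b. Pow (RR k P b))"
proof
  fix z assume "z \<in> key k P ` {x\<in>S. key k (insert w P) x = key k (insert w P) u}"
  then obtain x where x: "x \<in> S" "key k (insert w P) x = key k (insert w P) u" "z = key k P x" by blast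
  show "z \<in> {Inr u, Inr (par w)} \<union> Inl ` Sigma {bid k (insert w P) u, w} (\<lambda>b. Pow (RR k P b))"
  proof (cases "inb k P x")
    case True
    have i': "inb k (insert w P) x" using inb_mono True by blast
    have "key k (insert w P) u = Inl (bid k (insert w P) x, {z\<in>UU k (insert w P). E x z})"
      using x(2) key_inb[OF i'] by simp
    then have bu: "bid k (insert w P) u = bid k (insert w P) x" using key_Inl by metis
    have bx: "bid k P x \<in> {bid k (insert w P) u, w}" using bid_step[OF True w PL] bu by auto
    have "{z\<in>UU k P. E x z} \<subseteq> RR k P (bid k P x)" unfolding RR_def using True by blast
    then have "z = Inl (bid k P x, {z\<in>UU k P. E x z})" "(bid k P x, {z\<in>UU k P. E x z}) \<in> Sigma {bid k (insert w P) u, w} (\<lambda>b. Pow (RR k P b))"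
      using x(3) key_inb[OF True] bx by auto
    then show ?thesis by blast
  next
    case False
    show ?thesis
    proof (cases "inb k (insert w P) x")
      case True
      then have "x = par w" using inb_new False by blast
      then show ?thesis using x(3) key_ninb[OF False] by simp
    next
      case nb: False
      then have "key k (insert w P) u = Inr x" using x(2) key_ninb by simp
      then have "u = x" using key_Inr by metis
      then show ?thesis using x(3) key_ninb[OF False] by simp
    qed
  qed
qed

lemma keys_card:
  assumes PL: "P \<subseteq> L (Suc k)"
  shows "finite ({Inr u, Inr (par w)} \<union> Inl ` Sigma {b, w} (\<lambda>b. Pow (RR k P b)) :: ('a \<times> 'a set + 'a) set)
    \<and> card ({Inr u, Inr (par w)} \<union> Inl ` Sigma {b, w} (\<lambda>b. Pow (RR k P b)) :: ('a \<times> 'a set + 'a) set) \<le> 2 + 2 * cc"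
proof -
  have c2: "card {b, w} \<le> 2" by (simp add: card_insert_if)
  have sg: "finite (Sigma {b, w} (\<lambda>b. Pow (RR k P b))) \<and> card (Sigma {b, w} (\<lambda>b. Pow (RR k P b))) \<le> 2 * 2 ^ (t+3)"
    by (rule card_Sigma_Pow[of "{b, w}" 2]) (use RR_bound[OF PL] c2 in auto)
  have f: "finite (Inl ` Sigma {b, w} (\<lambda>b. Pow (RR k P b)) :: ('a \<times> 'a set + 'a) set)" using sg by simp
  have c: "card (Inl ` Sigma {b, w} (\<lambda>b. Pow (RR k P b)) :: ('a \<times> 'a set + 'a) set) \<le> 2 * cc"
  proof -
    have "card (Inl ` Sigma {b, w} (\<lambda>b. Pow (RR k P b)) :: ('a \<times> 'a set + 'a) set) \<le> card (Sigma {b, w} (\<lambda>b. Pow (RR k P b)))"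
      by (rule card_image_le) (use sg in simp)
    then show ?thesis using sg by linarith
  qed
  have c1: "card ({Inr u, Inr (par w)} :: ('a \<times> 'a set + 'a) set) \<le> 2" by (simp add: card_insert_if)
  have "card ({Inr u, Inr (par w)} \<union> Inl ` Sigma {b, w} (\<lambda>b. Pow (RR k P b)) :: ('a \<times> 'a set + 'a) set)
     \<le> card ({Inr u, Inr (par w)} :: ('a \<times> 'a set + 'a) set) + card (Inl ` Sigma {b, w} (\<lambda>b. Pow (RR k P b)) :: ('a \<times> 'a set + 'a) set)"
    by (rule card_Un_le)
  then show ?thesis using c c1 f by simp
qed

lemma stage_step:
  assumes pre: "prefix k P" and w: "w \<in> L (Suc k)" "w \<notin> P" and mn: "\<forall>b\<in>L (Suc k) - P. \<not> lt b w"
  shows "prefix k (insert w P) \<and> reach E (Pi k P) (Pi k (insert w P)) Dc"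
proof
  have PL: "P \<subseteq> L (Suc k)" using pre unfolding prefix_def by blast
  show pre': "prefix k (insert w P)"
    unfolding prefix_def
  proof (intro conjI allI impI)
    show "insert w P \<subseteq> L (Suc k)" using PL w by simp
    fix b c assume bc: "lt b c" "c \<in> insert w P"
    show "b \<in> insert w P"
    proof (cases "c = w")
      case True
      have "b \<in> L (Suc k)" using lt_V[OF bc(1)] w True L_iff by auto
      then show ?thesis using mn bc(1) True by blast
    next
      case False
      then have "c \<in> P" using bc by simp
      then show ?thesis using pre bc(1) unfolding prefix_def by blast
    qed
  qed
  have red: "red_maxdeg_le E (Pi k (insert w P)) (3 * cc)" by (rule red_bound[OF pre'])
  have ref: "refines (Pi k P) (Pi k (insert w P))"
    by (rule parts_refines) (use refine_step[OF w PL] in blast)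
  have cnt: "\<forall>c\<in>Pi k (insert w P). card {b\<in>Pi k P. b \<subseteq> c} \<le> 2 + 2 * cc"
  proof
    fix c assume "c \<in> Pi k (insert w P)"
    then obtain u where u: "u \<in> S" "c = {x\<in>S. key k (insert w P) x = key k (insert w P) u}"
      unfolding parts_def by blast
    have kc: "finite ({Inr u, Inr (par w)} \<union> Inl ` Sigma {bid k (insert w P) u, w} (\<lambda>b. Pow (RR k P b)) :: ('a \<times> 'a set + 'a) set)
    \<and> card ({Inr u, Inr (par w)} \<union> Inl ` Sigma {bid k (insert w P) u, w} (\<lambda>b. Pow (RR k P b)) :: ('a \<times> 'a set + 'a) set) \<le> 2 + 2 * cc"
      by (rule keys_card[OF PL])
    show "card {b\<in>Pi k P. b \<subseteq> c} \<le> 2 + 2 * cc"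
      unfolding u(2) by (rule parts_count[OF u(1) keys_step[OF w PL u(1)]]) (use kc in auto)
  qed
  show "reach E (Pi k P) (Pi k (insert w P)) Dc"
    by (rule chain[OF S_fin parts_ispart red parts_ispart ref cnt])
qed

lemma stage_level:
  "\<forall>P. card (L (Suc k) - P) = n \<longrightarrow> prefix k P \<longrightarrow> reach E (Pi k P) (Pi k (L (Suc k))) Dc"
proof (induction n)
  case 0
  show ?case
  proof (intro allI impI)
    fix P assume a: "card (L (Suc k) - P) = 0" "prefix k P"
    have PL: "P \<subseteq> L (Suc k)" using a(2) unfolding prefix_def by blast
    have "L (Suc k) - P = {}" using a(1) L_fin by simp
    then have "P = L (Suc k)" using PL by blast
    moreover have "red_maxdeg_le E (Pi k P) Dc"
      by (rule red_maxdeg_mono[OF red_bound[OF a(2)]]) simp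
    ultimately show "reach E (Pi k P) (Pi k (L (Suc k))) Dc" using reach_refl by simp
  qed
next
  case (Suc n)
  show ?case
  proof (intro allI impI)
    fix P assume a: "card (L (Suc k) - P) = Suc n" "prefix k P"
    have ne: "L (Suc k) - P \<noteq> {}"
    proof
      assume "L (Suc k) - P = {}"
      then have "card (L (Suc k) - P) = 0" by (simp only: card.empty)
      then show False using a(1) by simp
    qed
    have fin: "finite (L (Suc k) - P)" using L_fin by simp
    obtain w where w: "w \<in> L (Suc k) - P" "\<forall>b\<in>L (Suc k) - P. \<not> lt b w"
      using fin_min[OF fin ne, of lt] lt_irrefl lt_trans by blast
    have st: "prefix k (insert w P) \<and> reach E (Pi k P) (Pi k (insert w P)) Dc"
      using stage_step[OF a(2)] w by blast
    have "L (Suc k) - insert w P = (L (Suc k) - P) - {w}" by blast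
    then have "card (L (Suc k) - insert w P) = n" using a(1) w(1) fin by simp
    then have "reach E (Pi k (insert w P)) (Pi k (L (Suc k))) Dc" using Suc.IH st by blast
    then show "reach E (Pi k P) (Pi k (L (Suc k))) Dc" using reach_trans st by blast
  qed
qed

lemma prefix_empty: "prefix k {}" unfolding prefix_def by simp

lemma level_eq: "Pi (Suc k) (L (Suc (Suc k))) = Pi k {}"
proof (rule parts_cong)
  fix x assume xS: "x \<in> S"
  have ie: "inb (Suc k) (L (Suc (Suc k))) z \<longleftrightarrow> inb k {} z" for z
  proof
    assume "inb (Suc k) (L (Suc (Suc k))) z"
    then show "inb k {} z" unfolding inb_def by auto
  next
    assume a: "inb k {} z"
    then have z: "z \<in> V" "Suc k \<le> dep z" using ch_ne unfolding inb_def by auto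
    have "children V r par z \<subseteq> L (Suc (Suc k))" if "dep z = Suc k"
      using ch_dep ch_iff L_iff that by auto
    then show "inb (Suc k) (L (Suc (Suc k))) z" unfolding inb_def using z by auto
  qed
  have ue: "UU (Suc k) (L (Suc (Suc k))) = UU k {}" unfolding UU_def using ie by simp
  show "key (Suc k) (L (Suc (Suc k))) x = key k {} x"
  proof (cases "inb k {} x")
    case True
    have z: "x \<in> V" "Suc k \<le> dep x" using True ch_ne unfolding inb_def by auto
    have "bid (Suc k) (L (Suc (Suc k))) x = bid k {} x"
    proof (cases "dep x = Suc k")
      case True
      then have "at x (Suc k) = x" using at_self[of x] by simp
      then show ?thesis unfolding bid_def bidw_def using True by simp
    next
      case False
      then have d2: "Suc (Suc k) \<le> dep x" using z by simp
      have "at x (Suc (Suc k)) \<in> L (Suc (Suc k))" using at_V[OF z(1) d2] L_iff by simp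
      then have "bid (Suc k) (L (Suc (Suc k))) x = par (at x (Suc (Suc k)))"
        unfolding bid_def bidw_def using False by simp
      also have "\<dots> = at x (Suc k)" using par_at[OF z(1) d2] .
      finally show ?thesis unfolding bid_def bidw_def using False z by simp
    qed
    then show ?thesis using key_inb True ie ue by simp
  next
    case False
    then show ?thesis using key_ninb ie by simp
  qed
qed

lemma top: assumes "S \<noteq> {}" shows "Pi 0 (L 1) = {S}"
proof -
  have ib: "inb 0 (L 1) x" if "x \<in> V" for x
  proof -
    have "children V r par x \<subseteq> L 1" if "dep x = 0" using ch_dep ch_iff L_iff that by auto
    then show ?thesis unfolding inb_def using \<open>x \<in> V\<close> by auto
  qed
  have uu: "UU 0 (L 1) = {}" unfolding UU_def using ib by auto
  have bd: "bid 0 (L 1) x = r" if "x \<in> V" for x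
  proof (cases "dep x = 0")
    case True then show ?thesis unfolding bid_def using dep0 that by simp
  next
    case False
    then have d: "Suc 0 \<le> dep x" by simp
    have "at x (Suc 0) \<in> L 1" using at_V[OF that d] L_iff by simp
    then have "bid 0 (L 1) x = par (at x (Suc 0))" unfolding bid_def bidw_def using False by simp
    also have "\<dots> = at x 0" using par_at[OF that d] .
    also have "\<dots> = r" using at_V[OF that, of 0] dep0 by simp
    finally show ?thesis .
  qed
  have k: "key 0 (L 1) x = Inl (r, {})" if "x \<in> S" for x
    using key_inb[OF ib] bd uu that S_V by auto
  have "Pi 0 (L 1) = (\<lambda>u. {x\<in>S. key 0 (L 1) x = key 0 (L 1) u}) ` S" unfolding parts_def by simp
  also have "\<dots> = (\<lambda>u. S) ` S" using k by (intro image_cong refl) auto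
  also have "\<dots> = {S}" using assms by auto
  finally show ?thesis .
qed

lemma bottom: assumes "\<forall>x\<in>S. dep x \<le> K" shows "Pi K {} = {{x} | x. x \<in> S}"
proof -
  have k: "key K {} x = Inr x" if "x \<in> S" for x
  proof -
    have "\<not> inb K {} x" using assms that ch_ne S_V unfolding inb_def by auto
    then show ?thesis using key_ninb by simp
  qed
  have "Pi K {} = (\<lambda>u. {x\<in>S. key K {} x = key K {} u}) ` S" unfolding parts_def by simp
  also have "\<dots> = (\<lambda>u. {u}) ` S" using k by (intro image_cong refl) auto
  also have "\<dots> = {{x} | x. x \<in> S}" by blast
  finally show ?thesis .
qed

lemma levels: assumes "S \<noteq> {}" shows "reach E (Pi k {}) {S} Dc"
proof (induction k)
  case 0
  have "reach E (Pi 0 {}) (Pi 0 (L (Suc 0))) Dc" using stage_level prefix_empty by blast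
  then show ?case using top[OF assms] by simp
next
  case (Suc k)
  have "reach E (Pi (Suc k) {}) (Pi (Suc k) (L (Suc (Suc k)))) Dc" using stage_level prefix_empty by blast
  then have "reach E (Pi (Suc k) {}) (Pi k {}) Dc" using level_eq by simp
  then show ?case using reach_trans Suc.IH by blast
qed

lemma tw_S: "twin_width E S \<le> Dc"
proof (cases "S = {}")
  case True
  have "partition_sequence S (\<lambda>_. {}) \<and> (\<forall>i. 1 \<le> i \<and> i \<le> card S \<longrightarrow> red_maxdeg_le E {} Dc)"
    unfolding partition_sequence_def using True by simp
  then show ?thesis unfolding twin_width_def by (intro Least_le) blast
next
  case False
  define K where "K = Max (dep ` S)"
  have "\<forall>x\<in>S. dep x \<le> K" unfolding K_def using S_fin by simp
  then have "reach E {{x} | x. x \<in> S} {S} Dc" using levels[OF False, of K] bottom by simp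
  then obtain Q where Q: "Q (card {{x} | x. x \<in> S}) = {{x} | x. x \<in> S}" "Q (card {S}) = {S}"
    "\<forall>i. card {S} \<le> i \<and> i < card {{x} | x. x \<in> S} \<longrightarrow> mrg (Q (Suc i)) (Q i)"
    "\<forall>i. card {S} \<le> i \<and> i \<le> card {{x} | x. x \<in> S} \<longrightarrow> red_maxdeg_le E (Q i) Dc"
    unfolding reach_def by (elim conjE exE)
  have cs: "card {{x} | x. x \<in> S} = card S"
  proof -
    have "{{x} | x. x \<in> S} = (\<lambda>x. {x}) ` S" by blast
    moreover have "inj_on (\<lambda>x. {x}) S" by (simp add: inj_on_def)
    ultimately show ?thesis by (simp add: card_image)
  qed
  have "partition_sequence S Q"
    unfolding partition_sequence_def
  proof (intro conjI allI impI)
    show "Q (card S) = {{x} |x. x \<in> S}" using Q(1) cs by simp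
    fix i assume "1 \<le> i \<and> i < card S"
    then have "mrg (Q (Suc i)) (Q i)" using Q(3) cs by simp
    then show "\<exists>A\<in>Q (Suc i). \<exists>B\<in>Q (Suc i). A \<noteq> B \<and> Q i = insert (A \<union> B) (Q (Suc i) - {A, B})"
      unfolding mrg_def by blast
  qed
  moreover have "\<forall>i. 1 \<le> i \<and> i \<le> card S \<longrightarrow> red_maxdeg_le E (Q i) Dc" using Q(4) cs by simp
  ultimately show ?thesis unfolding twin_width_def by (intro Least_le) blast
qed

end

lemma (in LW) tw_bound: assumes "finite S" "S \<subseteq> V" shows "twin_width E S \<le> Dc"
proof -
  interpret LWS V r par lt E t Xf S
    by (intro LWS.intro LW_axioms LWS_axioms.intro assms)
  show ?thesis by (rule tw_S)
qed

theorem theorem1p14: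
  fixes V :: "'a set" and r :: 'a and par :: "'a \<Rightarrow> 'a"
    and lt :: "'a \<Rightarrow> 'a \<Rightarrow> bool" and E :: "'a \<Rightarrow> 'a \<Rightarrow> bool"
  assumes "layered_wheel V r par lt E"
    and "neat V r par"
    and "upward_restricted V r par E"
  shows "\<exists>d::nat. \<forall>S. finite S \<and> S \<subseteq> V \<longrightarrow> twin_width E S \<le> d"
proof -
  obtain t :: nat where t: "\<forall>v\<in>V. \<exists>X. finite X \<and> card X \<le> t
      \<and> (\<forall>x\<in>X. ancestor r par x v)
      \<and> (\<forall>x y. E x y \<and> \<not> layer_edge r par E x y \<and> ancestor r par v x \<and> \<not> ancestor r par v y
              \<longrightarrow> y \<in> X)"
    using assms(3) unfolding upward_restricted_def by blast
  obtain Xf where Xf: "\<forall>v\<in>V. finite (Xf v) \<and> card (Xf v) \<le> t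
      \<and> (\<forall>x\<in>Xf v. ancestor r par x v)
      \<and> (\<forall>x y. E x y \<and> \<not> layer_edge r par E x y \<and> ancestor r par v x \<and> \<not> ancestor r par v y
              \<longrightarrow> y \<in> Xf v)"
    using bchoice[OF t] by blast
  interpret LW V r par lt E t Xf
    by (intro LW.intro assms(1,2) Xf)
  show ?thesis using tw_bound by blast
qed


end
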